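(* Let $A\in\mathbb{R}^{m\times n}$, $c\in\mathbb{R}^n$, $\lambda>0$, let $h:\mathbb{R}^m\to\mathbb{R}$ be convex and twice continuously differentiable, and let $p:\mathbb{R}^n\to(-\infty,+\infty]$ be closed, proper and convex. Consider $$\min_{x\in\mathbb{R}^n}\ f(x):=h(Ax)-\langle c,x\rangle+\lambda p(x),$$ and assume its optimal solution set $\Omega$ is nonempty and compact. Fix $\tau>0$, a nondecreasing sequence of positive numbers $\sigma_k\uparrow\sigma_\infty\le\infty$, and summable nonnegative sequences $\{\epsilon_k\}_{k\ge0}$, $\{\delta_k\}_{k\ge0}$ with $\delta_k<1$ for all $k$. For $k\ge 0$ define $$f_k(x):=h(Ax)-\langle c,x\rangle+\lambda p(x)+\frac{1}{2\sigma_k}\|x-x^k\|^2+\frac{\tau}{2\sigma_k}\|Ax-Ax^k\|^2,$$ $$\psi_k(u):=-\frac{\tau}{2\sigma_k}\Big\|Ax^k+\frac{\sigma_k}{\tau}u\Big\|^2+\frac{\tau}{\sigma_k}\mathrm{E}_{\sigma_k h/\tau}\Big(Ax^k+\frac{\sigma_k}{\tau}u\Big)+\frac{\tau}{2\sigma_k}\|Ax^k\|^2-\frac{1}{2\sigma_k}\|x^k+\sigma_k c-\sigma_kA^Tu\|^2+\frac{1}{\sigma_k}\mathrm{E}_{\sigma_k\lambda p}(x^k+\sigma_k c-\sigma_kA^Tu)+\frac{1}{2\sigma_k}\|x^k\|^2 .$$ Starting from $x^0\in\mathbb{R}^n$, let the sequence $\{(x^k,u^k)\}$ be generated as follows: at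 iteration $k$, a vector $u^{k+1}\in\mathbb{R}^m$ is chosen and one sets $x^{k+1}=\mathrm{Prox}_{\sigma_k\lambda p}(x^k+\sigma_k c-\sigma_kA^Tu^{k+1})$, where $u^{k+1}$ is required to satisfy the criteria specified below; consider the criteria (A) $f_k(x^{k+1})-\psi_k(u^{k+1})\le \frac{\epsilon_k^2}{2\sigma_k}$; (B) $f_k(x^{k+1})-\psi_k(u^{k+1})\le \frac{\delta_k^2}{2\sigma_k}\|x^{k+1}-x^k\|^2+\frac{\tau\delta_k^2}{2\sigma_k}\|Ax^{k+1}-Ax^k\|^2$. Then: 1. If (A) is satisfied at every iteration, then $\{x^k\}$ is bounded and converges to some $x^*\in\Omega$. 2. Let $\mathcal{M}:=I_n+\tau A^TA$ and $\mathcal{T}_f:=\partial f$. Assume there exists $\kappa>0$ such that $$\mathrm{dist}(x,\Omega)\le\kappa\,\mathrm{dist}(0,\mathcal{T}_f(x))\quad\text{for all }x\in\mathbb{R}^n\text{ with }\mathrm{dist}(x,\Omega)\le\sum_{k=0}^\infty\epsilon_k+\mathrm{dist}_{\mathcal{M}}(x^0,\Omega).$$ If (A) and (B) are both satisfied at every iteration, then for all $k\ge0$, $$\mathrm{dist}_{\mathcal{M}}(x^{k+1},\Omega)\le\mu_k\,\mathrm{dist}_{\mathcal{M}}(x^k,\Omega),$$ where $\mu_k=(1-\delta_k)^{-1}\big[\delta_k+(1+\delta_k)\kappa\zeta(\sigma_k^2+\kappa^2\zeta^2)^{-1/2}\big]\to\mu_\infty=\kappa\zeta(\sigma_\infty^2+\kappa^2\zeta^2)^{-1/2}<1$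 as $k\to\infty$, with $\zeta:=1+\tau\lambda_{\max}(A^TA)$.
   Context: For a closed proper convex $q$, the Moreau envelope is $\mathrm{E}_q(x):=\min_y\{q(y)+\frac12\|y-x\|^2\}$ and $\mathrm{Prox}_q(x)$ is its unique minimizer. For a self-adjoint positive semidefinite linear operator $\mathcal{M}$, $\|x\|_{\mathcal{M}}:=\sqrt{\langle x,\mathcal{M}x\rangle}$ and $\mathrm{dist}_{\mathcal{M}}(x,\mathcal{C}):=\inf_{x'\in\mathcal{C}}\|x-x'\|_{\mathcal{M}}$; $\mathrm{dist}$ is the Euclidean distance; $\lambda_{\max}$ is the largest eigenvalue. When $\sigma_\infty=\infty$, $\mu_\infty=0$. *)

theory Defs
  imports "HOL-Analysis.Analysis" "HOL-Library.Extended_Real"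
begin

definition epigraph :: "('a \<Rightarrow> ereal) \<Rightarrow> ('a \<times> real) set" where
  "epigraph q = {(x, t). q x \<le> ereal t}"

definition ext_convex :: "('a::real_vector \<Rightarrow> ereal) \<Rightarrow> bool" where
  "ext_convex q \<longleftrightarrow> convex (epigraph q)"

definition ext_closed :: "('a::real_normed_vector \<Rightarrow> ereal) \<Rightarrow> bool" where
  "ext_closed q \<longleftrightarrow> closed (epigraph q)"

definition ext_proper :: "('a \<Rightarrow> ereal) \<Rightarrow> bool" where
  "ext_proper q \<longleftrightarrow> (\<forall>x. q x \<noteq> -\<infinity>) \<and> (\<exists>x. q x \<noteq> \<infinity>)"

definition C2_fun :: "(real^'m \<Rightarrow> real) \<Rightarrow> bool" where
  "C2_fun h \<longleftrightarrow> (\<exists>(g :: real^'m \<Rightarrow> real^'m) (H :: real^'m \<Rightarrow> real^'m^'m).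
      (\<forall>x. (h has_derivative (\<lambda>v. g x \<bullet> v)) (at x)) \<and>
      (\<forall>x. (g has_derivative (\<lambda>v. H x *v v)) (at x)) \<and>
      continuous_on UNIV H)"

definition moreau_env :: "('a::real_normed_vector \<Rightarrow> ereal) \<Rightarrow> 'a \<Rightarrow> real" where
  "moreau_env q x = real_of_ereal (INF y. q y + ereal (1/2 * (norm (y - x))\<^sup>2))"

definition prox :: "('a::real_normed_vector \<Rightarrow> ereal) \<Rightarrow> 'a \<Rightarrow> 'a" where
  "prox q x = (THE y. \<forall>z. q y + ereal (1/2 * (norm (y - x))\<^sup>2) \<le> q z + ereal (1/2 * (norm (z - x))\<^sup>2))"

definition subdiff :: "('a::real_inner \<Rightarrow> ereal) \<Rightarrow> 'a \<Rightarrow> 'a set" where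
  "subdiff q x = {v. q x < \<infinity> \<and> (\<forall>y. q x + ereal (v \<bullet> (y - x)) \<le> q y)}"

definition normM :: "real^'n^'n \<Rightarrow> real^'n \<Rightarrow> real" where
  "normM M v = sqrt (v \<bullet> (M *v v))"

definition distM :: "real^'n^'n \<Rightarrow> real^'n \<Rightarrow> (real^'n) set \<Rightarrow> real" where
  "distM M x C = (INF y\<in>C. normM M (x - y))"

definition lambda_max :: "real^'n^'n \<Rightarrow> real" where
  "lambda_max M = Max {\<mu>. \<exists>v. v \<noteq> 0 \<and> M *v v = \<mu> *\<^sub>R v}"

definition obj :: "real^'n^'m \<Rightarrow> real^'n \<Rightarrow> real \<Rightarrow> (real^'m \<Rightarrow> real) \<Rightarrow> (real^'n \<Rightarrow> ereal)
    \<Rightarrow> real^'n \<Rightarrow> ereal" where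
  "obj A c lam h p x = ereal (h (A *v x) - c \<bullet> x) + ereal lam * p x"

definition fk :: "real^'n^'m \<Rightarrow> real^'n \<Rightarrow> real \<Rightarrow> (real^'m \<Rightarrow> real) \<Rightarrow> (real^'n \<Rightarrow> ereal)
    \<Rightarrow> real \<Rightarrow> real \<Rightarrow> real^'n \<Rightarrow> real^'n \<Rightarrow> ereal" where
  "fk A c lam h p tau sig xk x = obj A c lam h p x +
     ereal (1 / (2 * sig) * (norm (x - xk))\<^sup>2 + tau / (2 * sig) * (norm (A *v x - A *v xk))\<^sup>2)"

definition psik :: "real^'n^'m \<Rightarrow> real^'n \<Rightarrow> real \<Rightarrow> (real^'m \<Rightarrow> real) \<Rightarrow> (real^'n \<Rightarrow> ereal)
    \<Rightarrow> real \<Rightarrow> real \<Rightarrow> real^'n \<Rightarrow> real^'m \<Rightarrow> real" where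
  "psik A c lam h p tau sig xk u =
     (let w = A *v xk + (sig / tau) *\<^sub>R u;
          z = xk + sig *\<^sub>R c - sig *\<^sub>R (transpose A *v u)
      in - tau / (2 * sig) * (norm w)\<^sup>2
         + tau / sig * moreau_env (\<lambda>y. ereal (sig / tau * h y)) w
         + tau / (2 * sig) * (norm (A *v xk))\<^sup>2
         - 1 / (2 * sig) * (norm z)\<^sup>2
         + 1 / sig * moreau_env (\<lambda>y. ereal (sig * lam) * p y) z
         + 1 / (2 * sig) * (norm xk)\<^sup>2)"

end

theory Submission
  imports Defs
begin



lemma norm_add_sq: fixes a b :: "'a::real_inner"
  shows "(norm (a + b))\<^sup>2 = (norm a)\<^sup>2 + 2 * (a \<bullet> b) + (norm b)\<^sup>2"
  by (simp add: power2_norm_eq_inner inner_add_left inner_add_right inner_commute)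

lemma norm_diff_sq: fixes a b :: "'a::real_inner"
  shows "(norm (a - b))\<^sup>2 = (norm a)\<^sup>2 - 2 * (a \<bullet> b) + (norm b)\<^sup>2"
  by (simp add: power2_norm_eq_inner inner_diff_left inner_diff_right inner_commute)

lemma AtA_inner:
  fixes A :: "real^'n^'m"
  shows "((transpose A ** A) *v v) \<bullet> w = (A *v v) \<bullet> (A *v w)"
proof -
  have "(transpose A ** A) *v v = transpose A *v (A *v v)" by (simp add: matrix_vector_mul_assoc)
  also have "\<dots> = (A *v v) v* A" by simp
  finally show ?thesis by (simp add: dot_lmul_matrix)
qed

lemma rayleigh_max:
  fixes A :: "real^'n^'m"
  obtains v0 mu0 where "norm v0 = 1" "(transpose A ** A) *v v0 = mu0 *\<^sub>R v0"
    "\<And>v. (norm (A *v v))\<^sup>2 \<le> mu0 * (norm v)\<^sup>2"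
proof -
  let ?B = "transpose A ** A"
  let ?g = "\<lambda>v::real^'n. (norm (A *v v))\<^sup>2"
  have "compact (sphere (0::real^'n) 1)" by simp
  moreover have "sphere (0::real^'n) 1 \<noteq> {}"
  proof -
    obtain b :: "real^'n" where "b \<in> Basis" using nonempty_Basis by blast
    then have "b \<in> sphere 0 1" by simp
    then show ?thesis by blast
  qed
  moreover have "continuous_on (sphere 0 1) ?g"
    by (intro continuous_intros linear_continuous_on matrix_vector_mul_bounded_linear)
  ultimately obtain v0 where v0: "v0 \<in> sphere 0 1" "\<forall>y\<in>sphere 0 1. ?g y \<le> ?g v0"
    using continuous_attains_sup by blast
  define mu0 where "mu0 = ?g v0"
  have nv0: "norm v0 = 1" using v0 by simp
  have bound: "?g v \<le> mu0 * (norm v)\<^sup>2" for v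
  proof (cases "v = 0")
    case True then show ?thesis by simp
  next
    case False
    let ?u = "(1 / norm v) *\<^sub>R v"
    have "?u \<in> sphere 0 1" using False by simp
    then have "?g ?u \<le> mu0" using v0 mu0_def by blast
    moreover have "?g ?u = ?g v / (norm v)\<^sup>2"
      by (simp add: matrix_vector_mult_scaleR power_divide)
    ultimately show ?thesis using False by (simp add: field_simps)
  qed
  define Q where "Q v = mu0 * (norm v)\<^sup>2 - ?g v" for v
  have Qnn: "Q v \<ge> 0" for v using bound[of v] by (simp add: Q_def)
  have Q0: "Q v0 = 0" using nv0 by (simp add: Q_def mu0_def)
  define w where "w = mu0 *\<^sub>R v0 - ?B *v v0"
  have key: "Q (v0 - t *\<^sub>R w) = - 2 * t * (w \<bullet> w) + t\<^sup>2 * Q w" for t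
  proof -
    have e1: "(norm (v0 - t *\<^sub>R w))\<^sup>2 = (norm v0)\<^sup>2 - 2 * t * (v0 \<bullet> w) + t\<^sup>2 * (norm w)\<^sup>2"
      by (simp add: norm_diff_sq power_mult_distrib)
    have e2: "?g (v0 - t *\<^sub>R w) = ?g v0 - 2 * t * ((A *v v0) \<bullet> (A *v w)) + t\<^sup>2 * ?g w"
      by (simp add: matrix_vector_mult_diff_distrib matrix_vector_mult_scaleR norm_diff_sq power_mult_distrib)
    have e3: "(A *v v0) \<bullet> (A *v w) = (?B *v v0) \<bullet> w" by (simp add: AtA_inner)
    have e4: "w \<bullet> w = mu0 * (v0 \<bullet> w) - (?B *v v0) \<bullet> w"
      by (simp add: w_def inner_diff_left)
    have "Q (v0 - t *\<^sub>R w) = Q v0 - 2*t*(mu0*(v0 \<bullet> w) - (?B *v v0) \<bullet> w) + t\<^sup>2 * Q w"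
      unfolding Q_def e1 e2 e3 by (simp add: algebra_simps)
    then show ?thesis using Q0 e4 by simp
  qed
  have "w \<bullet> w \<le> 0"
  proof (rule ccontr)
    assume "\<not> w \<bullet> w \<le> 0"
    then have pos: "w \<bullet> w > 0" by linarith
    define t where "t = (w \<bullet> w) / (Q w + 1)"
    have tpos: "t > 0" using pos Qnn[of w] by (simp add: t_def)
    have "t * Q w < 2 * (w \<bullet> w)"
    proof -
      have "t * Q w = (w \<bullet> w) * (Q w / (Q w + 1))" by (simp add: t_def)
      also have "\<dots> \<le> (w \<bullet> w) * 1"
        using pos Qnn[of w] by (intro mult_left_mono) auto
      finally show ?thesis using pos by linarith
    qed
    then have "t * (t * Q w - 2 * (w \<bullet> w)) < 0"
      using tpos by (intro mult_pos_neg) auto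
    then have "- 2 * t * (w \<bullet> w) + t\<^sup>2 * Q w < 0"
      by (simp add: power2_eq_square algebra_simps)
    then show False using Qnn[of "v0 - t *\<^sub>R w"] key[of t] by simp
  qed
  then have "w = 0" by (metis inner_eq_zero_iff inner_ge_zero order_antisym)
  then have "?B *v v0 = mu0 *\<^sub>R v0" by (simp add: w_def)
  then show ?thesis using that nv0 bound by blast
qed


lemma eigen_finite:
  fixes A :: "real^'n^'m"
  shows "finite {mu. \<exists>v. v \<noteq> 0 \<and> (transpose A ** A) *v v = mu *\<^sub>R v}"
proof -
  let ?B = "transpose A ** A"
  let ?E = "{mu. \<exists>v. v \<noteq> 0 \<and> ?B *v v = mu *\<^sub>R v}"
  define ev where "ev mu = (SOME v. v \<noteq> 0 \<and> ?B *v v = mu *\<^sub>R v)" for mu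
  have ev: "ev mu \<noteq> 0 \<and> ?B *v ev mu = mu *\<^sub>R ev mu" if "mu \<in> ?E" for mu
    using that unfolding ev_def by (rule CollectE) (rule someI_ex)
  have inj: "inj_on ev ?E"
  proof (rule inj_onI)
    fix m1 m2 assume m: "m1 \<in> ?E" "m2 \<in> ?E" "ev m1 = ev m2"
    then have "m1 *\<^sub>R ev m1 = m2 *\<^sub>R ev m1" using ev[OF m(1)] ev[OF m(2)] by metis
    then show "m1 = m2" using ev[OF m(1)] by (simp add: scaleR_cancel_right)
  qed
  have orth: "pairwise orthogonal (ev ` ?E)"
  proof (rule pairwiseI)
    fix x y assume xy: "x \<in> ev ` ?E" "y \<in> ev ` ?E" "x \<noteq> y"
    then obtain m1 m2 where m: "m1 \<in> ?E" "m2 \<in> ?E" "x = ev m1" "y = ev m2" by blast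
    then have "m1 \<noteq> m2" using xy by blast
    have "m1 * (x \<bullet> y) = (?B *v x) \<bullet> y" using ev[OF m(1)] m(3) by simp
    also have "\<dots> = (A *v x) \<bullet> (A *v y)" by (rule AtA_inner)
    also have "\<dots> = (?B *v y) \<bullet> x" by (metis AtA_inner inner_commute)
    also have "\<dots> = m2 * (x \<bullet> y)" using ev[OF m(2)] m(4) by (simp add: inner_commute)
    finally have "(m1 - m2) * (x \<bullet> y) = 0" by (simp add: algebra_simps)
    then show "orthogonal x y" using \<open>m1 \<noteq> m2\<close> by (simp add: orthogonal_def)
  qed
  have "0 \<notin> ev ` ?E"
  proof
    assume "0 \<in> ev ` ?E"
    then obtain mu where mu: "mu \<in> ?E" "0 = ev mu" by blast
    then show False using ev[OF mu(1)] by simp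
  qed
  then have "independent (ev ` ?E)" using orth pairwise_orthogonal_independent by blast
  then have "finite (ev ` ?E)" using independent_bound by blast
  then show ?thesis using inj finite_imageD by blast
qed

lemma lambda_max_bound:
  fixes A :: "real^'n^'m"
  shows "lambda_max (transpose A ** A) \<ge> 0"
    "\<And>v. (norm (A *v v))\<^sup>2 \<le> lambda_max (transpose A ** A) * (norm v)\<^sup>2"
proof -
  obtain v0 mu0 where v0: "norm v0 = 1" "(transpose A ** A) *v v0 = mu0 *\<^sub>R v0"
    and bd: "\<And>v. (norm (A *v v))\<^sup>2 \<le> mu0 * (norm v)\<^sup>2" by (rule rayleigh_max[of A]) auto
  have "v0 \<noteq> 0" using v0 by auto
  then have "mu0 \<in> {mu. \<exists>v. v \<noteq> 0 \<and> (transpose A ** A) *v v = mu *\<^sub>R v}" using v0 by blast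
  then have le: "mu0 \<le> lambda_max (transpose A ** A)"
    unfolding lambda_max_def using eigen_finite by (intro Max_ge) auto
  have "mu0 \<ge> 0" using bd[of v0] v0 by (metis mult.right_neutral one_power2 order_trans zero_le_power2)
  then show "lambda_max (transpose A ** A) \<ge> 0" using le by linarith
  fix v
  show "(norm (A *v v))\<^sup>2 \<le> lambda_max (transpose A ** A) * (norm v)\<^sup>2"
    using bd[of v] le by (meson mult_right_mono order_trans zero_le_power2)
qed



lemma affine_minorant:
  fixes q :: "'a::euclidean_space \<Rightarrow> ereal"
  assumes "closed (epigraph q)" "convex (epigraph q)" "\<forall>x. q x \<noteq> -\<infinity>" "\<exists>x. q x \<noteq> \<infinity>"
  shows "\<exists>a b. \<forall>x. ereal (a \<bullet> x + b) \<le> q x"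
proof -
  obtain x0 where "q x0 \<noteq> \<infinity>" using assms(4) by auto
  then obtain r where r: "q x0 = ereal r" using assms(3) by (cases "q x0") auto
  have "(x0, r - 1) \<notin> epigraph q" using r by (simp add: epigraph_def)
  from separating_hyperplane_closed_point[OF assms(2,1) this]
  obtain a b where ab: "inner a (x0, r-1) < b" "\<forall>z\<in>epigraph q. inner a z > b" by blast
  obtain a1 a2 where a: "a = (a1, a2)" by (cases a)
  have "(x0, r) \<in> epigraph q" using r by (simp add: epigraph_def)
  with ab have "a1 \<bullet> x0 + a2 * (r - 1) < b" "a1 \<bullet> x0 + a2 * r > b" by (auto simp: a)
  hence a2: "a2 > 0" by (simp add: algebra_simps)
  show ?thesis
  proof (intro exI allI)
    fix x
    show "ereal ((-(1/a2) *\<^sub>R a1) \<bullet> x + b / a2) \<le> q x"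
    proof (cases "q x")
      case (real s)
      then have "(x, s) \<in> epigraph q" by (simp add: epigraph_def)
      with ab have "a1 \<bullet> x + a2 * s > b" by (auto simp: a)
      then have "(-(1/a2) *\<^sub>R a1) \<bullet> x + b / a2 \<le> s" using a2 by (simp add: field_simps)
      then show ?thesis using real by simp
    next case PInf then show ?thesis by simp
    next case MInf then show ?thesis using assms(3) by simp
    qed
  qed
qed



lemma epi_lsc:
  fixes q :: "'a::real_normed_vector \<Rightarrow> ereal"
  assumes "closed (epigraph q)" "y \<longlonglongrightarrow> y0" "t \<longlonglongrightarrow> t0" "\<And>n. q (y n) \<le> ereal (t n)"
  shows "q y0 \<le> ereal t0"
proof -
  have L: "(\<lambda>n. (y n, t n)) \<longlonglongrightarrow> (y0, t0)" using assms(2,3) by (rule tendsto_Pair)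
  have E: "\<And>n. (y n, t n) \<in> epigraph q" using assms(4) by (simp add: epigraph_def)
  have "(y0, t0) \<in> epigraph q" by (rule closed_sequentially[OF assms(1) E L])
  then show ?thesis by (simp add: epigraph_def)
qed

lemma moreau_le:
  fixes q :: "'a::real_inner \<Rightarrow> ereal"
  assumes "\<forall>y. ereal (a \<bullet> y + b) \<le> q y" "q x = ereal r"
  shows "moreau_env q w \<le> r + 1/2 * (norm (x - w))\<^sup>2"
proof -
  let ?I = "INF y. q y + ereal (1/2 * (norm (y - w))\<^sup>2)"
  have up: "?I \<le> ereal (r + 1/2 * (norm (x - w))\<^sup>2)"
    by (rule INF_lower2[of x]) (auto simp: assms(2))
  have lo: "ereal (b + a \<bullet> w - 1/2 * (norm a)\<^sup>2) \<le> ?I"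
  proof (rule INF_greatest)
    fix y
    have e: "(norm ((y - w) + a))\<^sup>2 = (norm (y-w))\<^sup>2 + 2 * ((y - w) \<bullet> a) + (norm a)\<^sup>2"
      by (rule norm_add_sq)
    have "(y - w) \<bullet> a = a \<bullet> y - a \<bullet> w" by (metis inner_commute inner_diff_right)
    with e have "b + a \<bullet> w - 1/2 * (norm a)\<^sup>2 \<le> (a \<bullet> y + b) + 1/2 * (norm (y - w))\<^sup>2"
      using zero_le_power2[of "norm ((y - w) + a)"] by linarith
    then have "ereal (b + a \<bullet> w - 1/2 * (norm a)\<^sup>2) \<le> ereal (a \<bullet> y + b) + ereal (1/2 * (norm (y - w))\<^sup>2)"
      by simp
    also have "\<dots> \<le> q y + ereal (1/2 * (norm (y - w))\<^sup>2)"
      using assms(1) by (intro add_right_mono) auto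
    finally show "ereal (b + a \<bullet> w - 1/2 * (norm a)\<^sup>2) \<le> q y + ereal (1/2 * (norm (y - w))\<^sup>2)" .
  qed
  have "?I \<noteq> \<infinity>" "?I \<noteq> -\<infinity>" using up lo by auto
  then obtain v where v: "?I = ereal v" by (cases ?I) auto
  show ?thesis using up unfolding moreau_env_def v by simp
qed




lemma r1: fixes s tau N nax i0 iu na :: real assumes "s > 0" "tau > 0"
  shows "-tau/(2 * s)*N + tau/(2 * s)*(nax - 2*(i0 + (s/tau)*iu) + N) + tau/(2 * s)*na = tau/(2 * s)*(nax - 2*i0 + na) - iu"
  using assms by (simp add: field_simps)
lemma r2: fixes s N nx ixk icx ixv nxk :: real assumes "s > 0"
  shows "- 1/(2 * s)*N + 1/(2 * s)*(nx - 2*(ixk + s*icx - s*ixv) + N) + 1/(2 * s)*nxk = 1/(2 * s)*(nx - 2*ixk + nxk) - icx + ixv"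
  using assms by (simp add: field_simps)

lemma dual_id1:
  fixes ax a0 u :: "'a::real_inner" and s tau :: real
  assumes "s > 0" "tau > 0"
  shows "- tau / (2 * s) * (norm (a0 + (s/tau) *\<^sub>R u))\<^sup>2 + tau/(2 * s) * (norm (ax - (a0 + (s/tau) *\<^sub>R u)))\<^sup>2
          + tau / (2 * s) * (norm a0)\<^sup>2 = tau/(2 * s) * (norm (ax - a0))\<^sup>2 - ax \<bullet> u"
proof -
  have e1: "(norm (ax - (a0 + (s/tau) *\<^sub>R u)))\<^sup>2 = (norm ax)\<^sup>2 - 2 * (ax \<bullet> (a0 + (s/tau) *\<^sub>R u)) + (norm (a0 + (s/tau) *\<^sub>R u))\<^sup>2"
    by (rule norm_diff_sq)
  have e2: "ax \<bullet> (a0 + (s/tau) *\<^sub>R u) = ax \<bullet> a0 + (s/tau) * (ax \<bullet> u)" by (simp add: inner_add_right)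
  have e3: "(norm (ax - a0))\<^sup>2 = (norm ax)\<^sup>2 - 2 * (ax \<bullet> a0) + (norm a0)\<^sup>2" by (rule norm_diff_sq)
  show ?thesis unfolding e1 e2 e3 by (rule r1[OF assms])
qed

lemma dual_id2:
  fixes x xk c v :: "'a::real_inner" and s :: real
  assumes "s > 0"
  shows "- 1 / (2 * s) * (norm (xk + s *\<^sub>R c - s *\<^sub>R v))\<^sup>2 + 1/(2 * s) * (norm (x - (xk + s *\<^sub>R c - s *\<^sub>R v)))\<^sup>2
          + 1 / (2 * s) * (norm xk)\<^sup>2 = 1/(2 * s) * (norm (x - xk))\<^sup>2 - c \<bullet> x + x \<bullet> v"
proof -
  let ?z = "xk + s *\<^sub>R c - s *\<^sub>R v"
  have e1: "(norm (x - ?z))\<^sup>2 = (norm x)\<^sup>2 - 2 * (x \<bullet> ?z) + (norm ?z)\<^sup>2" by (rule norm_diff_sq)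
  have e2: "x \<bullet> ?z = x \<bullet> xk + s * (c \<bullet> x) - s * (x \<bullet> v)" by (simp add: inner_add_right inner_diff_right inner_commute)
  have e3: "(norm (x - xk))\<^sup>2 = (norm x)\<^sup>2 - 2 * (x \<bullet> xk) + (norm xk)\<^sup>2" by (rule norm_diff_sq)
  show ?thesis unfolding e1 e2 e3 by (rule r2[OF assms])
qed

lemma C2_cont: "C2_fun h \<Longrightarrow> continuous_on UNIV h"
  unfolding C2_fun_def
  by (metis continuous_at_imp_continuous_on has_derivative_continuous)

locale prob =
  fixes A :: "real^'n^'m" and c :: "real^'n" and lam tau :: real
    and h :: "real^'m \<Rightarrow> real" and p :: "real^'n \<Rightarrow> ereal"
  assumes lam_pos: "lam > 0" and tau_pos: "tau > 0"
    and h_convex: "convex_on UNIV h" and h_cont: "continuous_on UNIV h"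
    and p_closed: "ext_closed p" and p_proper: "ext_proper p" and p_convex: "ext_convex p"
    and fmin: "\<exists>z. \<forall>y. obj A c lam h p z \<le> obj A c lam h p y"
begin

definition "D = {x. p x \<noteq> \<infinity>}"
definition "P x = real_of_ereal (p x)"
definition "F0 x = h (A *v x) - c \<bullet> x + lam * P x"
definition "E v = (v, sqrt tau *\<^sub>R (A *v v))"
definition "Fk s xk x = F0 x + (norm (E (x - xk)))\<^sup>2 / (2 * s)"
definition "L = lambda_max (transpose A ** A)"
definition "Mt = mat 1 + tau *\<^sub>R (transpose A ** A)"

lemma p_fin: "x \<in> D \<Longrightarrow> p x = ereal (P x)"
  using p_proper unfolding D_def P_def ext_proper_def by (cases "p x") auto

lemma notD: "x \<notin> D \<Longrightarrow> p x = \<infinity>" unfolding D_def by auto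

lemma obj_D: "x \<in> D \<Longrightarrow> obj A c lam h p x = ereal (F0 x)"
  by (simp add: obj_def F0_def p_fin)

lemma obj_notD: "x \<notin> D \<Longrightarrow> obj A c lam h p x = \<infinity>"
  using lam_pos by (simp add: obj_def notD)

lemma E_sq: "(norm (E v))\<^sup>2 = (norm v)\<^sup>2 + tau * (norm (A *v v))\<^sup>2"
  using tau_pos by (simp add: E_def norm_prod_def power_mult_distrib)

lemma E_diff: "E (x - y) = E x - E y"
  by (simp add: E_def matrix_vector_mult_diff_distrib scaleR_diff_right)
lemma E_add: "E (x + y) = E x + E y"
  by (simp add: E_def matrix_vector_right_distrib scaleR_add_right)
lemma E_scale: "E (t *\<^sub>R x) = t *\<^sub>R E x"
  by (simp add: E_def matrix_vector_mult_scaleR)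

lemma E_inner: "E v \<bullet> E w = (Mt *v v) \<bullet> w"
  using tau_pos by (simp add: E_def Mt_def matrix_vector_mult_add_rdistrib inner_add_left
      scaleR_matrix_vector_assoc[symmetric] AtA_inner)

lemma normM_E: "normM Mt v = norm (E v)"
  unfolding normM_def by (metis E_inner inner_commute norm_eq_sqrt_inner)

lemma L_nonneg: "L \<ge> 0" unfolding L_def by (rule lambda_max_bound(1))
lemma L_bound: "(norm (A *v v))\<^sup>2 \<le> L * (norm v)\<^sup>2" unfolding L_def by (rule lambda_max_bound(2))

lemma norm_le_E: "norm v \<le> norm (E v)"
  using E_sq[of v] tau_pos by (metis le_add_same_cancel1 mult_nonneg_nonneg norm_ge_zero power2_le_imp_le zero_le_power2 less_imp_le)

lemma E_le: "norm (E v) \<le> sqrt (1 + tau * L) * norm v"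
proof -
  have "(norm (E v))\<^sup>2 \<le> (1 + tau * L) * (norm v)\<^sup>2"
    using E_sq[of v] L_bound[of v] tau_pos by (simp add: algebra_simps mult_left_mono)
  then have "norm (E v) \<le> sqrt ((1 + tau * L) * (norm v)\<^sup>2)" by (simp add: real_le_rsqrt)
  then show ?thesis by (simp add: real_sqrt_mult)
qed

lemma Mt_bound: "(norm (Mt *v w))\<^sup>2 \<le> (1 + tau * L) * (norm (E w))\<^sup>2"
proof -
  let ?B = "transpose A ** A"
  define X where "X = (norm w)\<^sup>2"
  define Y where "Y = (norm (A *v w))\<^sup>2"
  define Z where "Z = (norm (?B *v w))\<^sup>2"
  have Mw: "Mt *v w = w + tau *\<^sub>R (?B *v w)"
    by (simp add: Mt_def matrix_vector_mult_add_rdistrib scaleR_matrix_vector_assoc[symmetric])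
  have wB: "w \<bullet> (?B *v w) = Y"
  proof -
    have "w \<bullet> (?B *v w) = (?B *v w) \<bullet> w" by (rule inner_commute)
    also have "\<dots> = (A *v w) \<bullet> (A *v w)" by (rule AtA_inner)
    finally show ?thesis by (simp add: Y_def power2_norm_eq_inner)
  qed
  have BB: "Z \<le> L * Y"
  proof -
    have "Z = (A *v w) \<bullet> (A *v (?B *v w))"
      unfolding Z_def power2_norm_eq_inner by (rule AtA_inner)
    also have "\<dots> \<le> norm (A *v w) * norm (A *v (?B *v w))" by (rule norm_cauchy_schwarz)
    also have "\<dots> \<le> norm (A *v w) * (sqrt L * norm (?B *v w))"
    proof (rule mult_left_mono)
      have "(norm (A *v (?B *v w)))\<^sup>2 \<le> (sqrt L * norm (?B *v w))\<^sup>2"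
        using L_bound[of "?B *v w"] L_nonneg by (simp add: power_mult_distrib)
      then show "norm (A *v (?B *v w)) \<le> sqrt L * norm (?B *v w)"
        by (rule power2_le_imp_le) (use L_nonneg in auto)
    qed simp
    finally have 1: "Z \<le> (sqrt L * norm (A *v w)) * norm (?B *v w)" by (simp only: mult_ac)
    show ?thesis
    proof (cases "norm (?B *v w) = 0")
      case True then show ?thesis using L_nonneg unfolding Z_def Y_def by simp
    next
      case False
      then have pos: "norm (?B *v w) > 0" by simp
      have "norm (?B *v w) * norm (?B *v w) \<le> (sqrt L * norm (A *v w)) * norm (?B *v w)"
        using 1 unfolding Z_def by (simp add: power2_eq_square)
      then have "norm (?B *v w) \<le> sqrt L * norm (A *v w)"
        using pos by (rule mult_right_le_imp_le)
      then have "(norm (?B *v w))\<^sup>2 \<le> (sqrt L * norm (A *v w))\<^sup>2"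
        by (intro power_mono) auto
      then show ?thesis using L_nonneg unfolding Z_def Y_def by (simp add: power_mult_distrib)
    qed
  qed
  have "(norm (Mt *v w))\<^sup>2 = X + 2 * tau * Y + tau\<^sup>2 * Z"
    unfolding Mw norm_add_sq X_def Z_def using wB by (simp add: power_mult_distrib)
  also have "\<dots> \<le> (1 + tau * L) * (X + tau * Y)"
  proof -
    have a: "tau * Y \<le> tau * (L * X)" using L_bound[of w] tau_pos unfolding X_def Y_def by simp
    have b: "tau\<^sup>2 * Z \<le> tau\<^sup>2 * (L * Y)" using BB by (intro mult_left_mono) auto
    have c: "(1 + tau * L) * (X + tau * Y) = X + tau * Y + tau * (L * X) + tau\<^sup>2 * (L * Y)"
      by (simp add: algebra_simps power2_eq_square)
    show ?thesis using a b c by linarith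
  qed
  finally show ?thesis by (simp add: E_sq X_def Y_def)
qed

end


context prob begin

lemma fstar: "\<exists>fs. \<forall>y\<in>D. fs \<le> F0 y"
proof -
  obtain z where z: "\<forall>y. obj A c lam h p z \<le> obj A c lam h p y" using fmin by blast
  obtain x1 where "p x1 \<noteq> \<infinity>" using p_proper unfolding ext_proper_def by blast
  then have x1: "x1 \<in> D" by (simp add: D_def)
  have zD: "z \<in> D"
  proof (rule ccontr)
    assume "z \<notin> D"
    then have "obj A c lam h p z = \<infinity>" by (rule obj_notD)
    then show False using z[rule_format, of x1] obj_D[OF x1] by simp
  qed
  show ?thesis
  proof (intro exI ballI)
    fix y assume "y \<in> D"
    then show "F0 z \<le> F0 y" using z[rule_format, of y] obj_D[OF zD] obj_D by simp
  qed
qed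

lemma P_convex:
  assumes "x \<in> D" "y \<in> D" "0 \<le> t" "t \<le> 1"
  shows "(1-t) *\<^sub>R x + t *\<^sub>R y \<in> D \<and> P ((1-t) *\<^sub>R x + t *\<^sub>R y) \<le> (1-t) * P x + t * P y"
proof -
  have cv: "convex (epigraph p)" using p_convex by (simp add: ext_convex_def)
  have "(x, P x) \<in> epigraph p" "(y, P y) \<in> epigraph p"
    using p_fin assms by (auto simp: epigraph_def)
  from convexD[OF cv this, of "1-t" t] assms
  have "((1-t) *\<^sub>R x + t *\<^sub>R y, (1-t) * P x + t * P y) \<in> epigraph p" by simp
  then have le: "p ((1-t) *\<^sub>R x + t *\<^sub>R y) \<le> ereal ((1-t) * P x + t * P y)" by (simp add: epigraph_def)
  then have "(1-t) *\<^sub>R x + t *\<^sub>R y \<in> D" by (auto simp: D_def)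
  moreover then have "P ((1-t) *\<^sub>R x + t *\<^sub>R y) \<le> (1-t) * P x + t * P y" using le p_fin by fastforce
  ultimately show ?thesis by blast
qed

lemma F0_convex:
  assumes "x \<in> D" "y \<in> D" "0 \<le> t" "t \<le> 1"
  shows "F0 ((1-t) *\<^sub>R x + t *\<^sub>R y) \<le> (1-t) * F0 x + t * F0 y"
proof -
  have "h (A *v ((1-t) *\<^sub>R x + t *\<^sub>R y)) = h ((1-t) *\<^sub>R (A *v x) + t *\<^sub>R (A *v y))"
    by (simp add: matrix_vector_right_distrib matrix_vector_mult_scaleR)
  also have "\<dots> \<le> (1-t) * h (A *v x) + t * h (A *v y)"
    using convex_onD[OF h_convex] assms by simp
  finally have 1: "h (A *v ((1-t) *\<^sub>R x + t *\<^sub>R y)) \<le> (1-t) * h (A *v x) + t * h (A *v y)" .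
  have 2: "lam * P ((1-t) *\<^sub>R x + t *\<^sub>R y) \<le> lam * ((1-t) * P x + t * P y)"
    using P_convex[OF assms] lam_pos by (intro mult_left_mono) auto
  have 3: "c \<bullet> ((1-t) *\<^sub>R x + t *\<^sub>R y) = (1-t) * (c \<bullet> x) + t * (c \<bullet> y)"
    by (simp add: inner_add_right)
  show ?thesis using 1 2 3 unfolding F0_def by (simp add: algebra_simps)
qed

lemma h_minor: "\<exists>a b. \<forall>y. a \<bullet> y + b \<le> h y"
proof -
  have cl: "closed (epigraph (\<lambda>y. ereal (h y)))"
  proof -
    have "epigraph (\<lambda>y. ereal (h y)) = {z. h (fst z) \<le> snd z}" by (auto simp: epigraph_def)
    moreover have "closed {z::((real^'m) \<times> real). h (fst z) \<le> snd z}"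
      by (intro closed_Collect_le continuous_on_compose2[OF h_cont] continuous_intros) auto
    ultimately show ?thesis by simp
  qed
  have cv: "convex (epigraph (\<lambda>y. ereal (h y)))"
  proof (rule convexI)
    fix u v :: "(real^'m) \<times> real" and a b :: real
    assume uv: "u \<in> epigraph (\<lambda>y. ereal (h y))" "v \<in> epigraph (\<lambda>y. ereal (h y))" "0 \<le> a" "0 \<le> b" "a + b = 1"
    then have "h (fst u) \<le> snd u" "h (fst v) \<le> snd v" by (auto simp: epigraph_def)
    moreover have "h (a *\<^sub>R fst u + b *\<^sub>R fst v) \<le> a * h (fst u) + b * h (fst v)"
      using convex_onD[OF h_convex, of b "fst u" "fst v"] uv by (simp add: eq_diff_eq[symmetric])
    ultimately have "h (a *\<^sub>R fst u + b *\<^sub>R fst v) \<le> a * snd u + b * snd v"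
      using uv by (smt (verit) mult_left_mono)
    then show "a *\<^sub>R u + b *\<^sub>R v \<in> epigraph (\<lambda>y. ereal (h y))" by (simp add: epigraph_def case_prod_beta)
  qed
  obtain a b where "\<forall>x. ereal (a \<bullet> x + b) \<le> ereal (h x)"
    using affine_minorant[OF cl cv] by auto
  then show ?thesis by auto
qed

lemma p_minor: "\<exists>a b. \<forall>y. ereal (a \<bullet> y + b) \<le> p y"
  using affine_minorant[of p] p_closed p_convex p_proper
  unfolding ext_closed_def ext_convex_def ext_proper_def by blast

lemma At_inner: "x \<bullet> (transpose A *v u) = (A *v x) \<bullet> u"
  by (metis dot_lmul_matrix inner_commute transpose_matrix_vector)

lemma weak_dual:
  assumes s: "s > 0" and x: "x \<in> D"
  shows "psik A c lam h p tau s xk u \<le> Fk s xk x"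
proof -
  define w where "w = A *v xk + (s / tau) *\<^sub>R u"
  define z where "z = xk + s *\<^sub>R c - s *\<^sub>R (transpose A *v u)"
  obtain ah bh where ah: "\<forall>y. ah \<bullet> y + bh \<le> h y" using h_minor by blast
  obtain ap bp where ap: "\<forall>y. ereal (ap \<bullet> y + bp) \<le> p y" using p_minor by blast
  have m1: "moreau_env (\<lambda>y. ereal (s / tau * h y)) w \<le> s / tau * h (A *v x) + 1/2 * (norm (A *v x - w))\<^sup>2"
  proof (rule moreau_le)
    show "\<forall>y. ereal (((s/tau) *\<^sub>R ah) \<bullet> y + s/tau * bh) \<le> ereal (s / tau * h y)"
    proof
      fix y
      have "s/tau * (ah \<bullet> y + bh) \<le> s/tau * h y" using ah s tau_pos by (intro mult_left_mono) auto
      then show "ereal (((s/tau) *\<^sub>R ah) \<bullet> y + s/tau * bh) \<le> ereal (s / tau * h y)"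
        by (simp add: algebra_simps)
    qed
  qed simp
  have m2: "moreau_env (\<lambda>y. ereal (s * lam) * p y) z \<le> s * lam * P x + 1/2 * (norm (x - z))\<^sup>2"
  proof (rule moreau_le)
    show "\<forall>y. ereal (((s*lam) *\<^sub>R ap) \<bullet> y + s*lam * bp) \<le> ereal (s * lam) * p y"
    proof
      fix y
      have "ereal (s*lam) * ereal (ap \<bullet> y + bp) \<le> ereal (s * lam) * p y"
        using ap s lam_pos by (intro ereal_mult_left_mono) auto
      then show "ereal (((s*lam) *\<^sub>R ap) \<bullet> y + s*lam * bp) \<le> ereal (s * lam) * p y"
        by (simp add: algebra_simps)
    qed
    show "ereal (s * lam) * p x = ereal (s * lam * P x)" using p_fin[OF x] by simp
  qed
  have "psik A c lam h p tau s xk u =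
     - tau / (2 * s) * (norm w)\<^sup>2
         + tau / s * moreau_env (\<lambda>y. ereal (s / tau * h y)) w
         + tau / (2 * s) * (norm (A *v xk))\<^sup>2
         - 1 / (2 * s) * (norm z)\<^sup>2
         + 1 / s * moreau_env (\<lambda>y. ereal (s * lam) * p y) z
         + 1 / (2 * s) * (norm xk)\<^sup>2"
    unfolding psik_def w_def z_def Let_def by simp
  also have "\<dots> \<le> - tau / (2 * s) * (norm w)\<^sup>2
         + tau / s * (s / tau * h (A *v x) + 1/2 * (norm (A *v x - w))\<^sup>2)
         + tau / (2 * s) * (norm (A *v xk))\<^sup>2
         - 1 / (2 * s) * (norm z)\<^sup>2
         + 1 / s * (s * lam * P x + 1/2 * (norm (x - z))\<^sup>2)
         + 1 / (2 * s) * (norm xk)\<^sup>2"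
  proof -
    have "tau / s * moreau_env (\<lambda>y. ereal (s / tau * h y)) w \<le> tau / s * (s / tau * h (A *v x) + 1/2 * (norm (A *v x - w))\<^sup>2)"
      using m1 s tau_pos by (intro mult_left_mono) auto
    moreover have "1 / s * moreau_env (\<lambda>y. ereal (s * lam) * p y) z \<le> 1 / s * (s * lam * P x + 1/2 * (norm (x - z))\<^sup>2)"
      using m2 s by (intro mult_left_mono) auto
    ultimately show ?thesis by linarith
  qed
  also have "\<dots> = h (A *v x) + lam * P x
       + (- tau / (2 * s) * (norm w)\<^sup>2 + tau/(2 * s) * (norm (A *v x - w))\<^sup>2 + tau / (2 * s) * (norm (A *v xk))\<^sup>2)
       + (- 1 / (2 * s) * (norm z)\<^sup>2 + 1/(2 * s) * (norm (x - z))\<^sup>2 + 1 / (2 * s) * (norm xk)\<^sup>2)"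
    using s tau_pos by (simp add: field_simps)
  also have "\<dots> = h (A *v x) + lam * P x + (tau/(2 * s) * (norm (A *v x - A *v xk))\<^sup>2 - (A *v x) \<bullet> u)
       + (1/(2 * s) * (norm (x - xk))\<^sup>2 - c \<bullet> x + x \<bullet> (transpose A *v u))"
    unfolding w_def z_def dual_id1[OF s tau_pos] dual_id2[OF s] by simp
  also have "\<dots> = Fk s xk x"
    unfolding Fk_def F0_def E_sq At_inner using s by (simp add: matrix_vector_mult_diff_distrib field_simps)
  finally show ?thesis .
qed

lemma fk_eq:
  assumes "s > 0"
  shows "x \<in> D \<Longrightarrow> fk A c lam h p tau s xk x = ereal (Fk s xk x)"
    and "x \<notin> D \<Longrightarrow> fk A c lam h p tau s xk x = \<infinity>"
proof -
  assume "x \<in> D"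
  then show "fk A c lam h p tau s xk x = ereal (Fk s xk x)"
    unfolding fk_def obj_D[OF \<open>x \<in> D\<close>] Fk_def E_sq using assms
    by (simp add: matrix_vector_mult_diff_distrib field_simps)
next
  assume "x \<notin> D"
  then show "fk A c lam h p tau s xk x = \<infinity>" unfolding fk_def obj_notD[OF \<open>x \<notin> D\<close>] by simp
qed

end


lemma tendsto_mv [tendsto_intros]:
  fixes A :: "real^'n^'m"
  shows "(f \<longlongrightarrow> l) F \<Longrightarrow> ((\<lambda>n. A *v f n) \<longlongrightarrow> A *v l) F"
  by (rule bounded_linear.tendsto[OF matrix_vector_mul_bounded_linear])

lemma small_t:
  fixes a K :: real
  assumes "\<And>t. 0 < t \<Longrightarrow> t \<le> 1 \<Longrightarrow> 0 \<le> a + t * K"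
  shows "0 \<le> a"
proof (rule ccontr)
  assume "\<not> 0 \<le> a"
  then have a: "a < 0" by simp
  define t where "t = min 1 (- a / (2 * (\<bar>K\<bar> + 1)))"
  have "- a / (2 * (\<bar>K\<bar> + 1)) > 0" using a by (intro divide_pos_pos) auto
  then have tpos: "t > 0" by (simp add: t_def)
  have t1: "t \<le> 1" by (simp add: t_def)
  have "t * K \<le> t * \<bar>K\<bar>" using tpos by (intro mult_left_mono) auto
  also have "\<dots> \<le> (- a / (2 * (\<bar>K\<bar> + 1))) * \<bar>K\<bar>" by (intro mult_right_mono) (auto simp: t_def)
  also have "\<dots> = - a / 2 * (\<bar>K\<bar> / (\<bar>K\<bar> + 1))" by (simp add: field_simps)
  also have "\<dots> \<le> - a / 2 * 1" using a by (intro mult_left_mono) auto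
  finally have "t * K \<le> - a / 2" by simp
  then have "a + t * K < 0" using a by linarith
  then show False using assms[OF tpos t1] by linarith
qed

context prob begin

lemma h_isCont: "isCont h z"
  using h_cont by (simp add: continuous_on_eq_continuous_at)

lemma D_ne: "D \<noteq> {}" using p_proper unfolding ext_proper_def D_def by auto

lemma Fk_ge: "x \<in> D \<Longrightarrow> \<forall>y\<in>D. fs \<le> F0 y \<Longrightarrow> s > 0 \<Longrightarrow> fs + (norm (x - xk))\<^sup>2 / (2 * s) \<le> Fk s xk x"
proof -
  assume a: "x \<in> D" "\<forall>y\<in>D. fs \<le> F0 y" "s > 0"
  have "(norm (x - xk))\<^sup>2 \<le> (norm (E (x - xk)))\<^sup>2" using norm_le_E by (simp add: power_mono)
  then have "(norm (x - xk))\<^sup>2 / (2 * s) \<le> (norm (E (x - xk)))\<^sup>2 / (2 * s)" using a by (simp add: divide_right_mono)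
  then show ?thesis using a unfolding Fk_def by force
qed

lemma Fk_min:
  assumes s: "s > 0"
  shows "\<exists>xb\<in>D. \<forall>y\<in>D. Fk s xk xb \<le> Fk s xk y"
proof -
  obtain fs where fs: "\<forall>y\<in>D. fs \<le> F0 y" using fstar by blast
  let ?S = "Fk s xk ` D"
  have bdd: "bdd_below ?S"
  proof
    fix v assume "v \<in> ?S"
    then obtain y where "y \<in> D" "v = Fk s xk y" by blast
    then show "fs \<le> v" using Fk_ge[of y fs s xk] fs s by (smt (verit) divide_nonneg_pos s zero_le_power2)
  qed
  define m where "m = Inf ?S"
  have mle: "m \<le> Fk s xk y" if "y \<in> D" for y
    unfolding m_def using bdd that by (intro cInf_lower) auto
  have "\<exists>y\<in>D. Fk s xk y < m + 1 / (Suc n)" for n :: nat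
  proof -
    have "Inf ?S < m + 1 / Suc n" unfolding m_def by simp
    then obtain v where "v \<in> ?S" "v < m + 1 / Suc n"
      using cInf_lessD[of ?S] D_ne by blast
    then show ?thesis by blast
  qed
  then obtain ys where ys: "\<And>n. ys n \<in> D" "\<And>n. Fk s xk (ys n) < m + 1 / Suc n" by metis
  have "bounded (range ys)"
  proof -
    have "norm (ys n - xk) \<le> sqrt (2 * s * (m + 1 - fs))" for n
    proof -
      have "fs + (norm (ys n - xk))\<^sup>2 / (2 * s) \<le> m + 1"
      proof -
        have "1 / real (Suc n) \<le> 1" by simp
        then show ?thesis using Fk_ge[OF ys(1)[of n] fs s, where xk=xk] ys(2)[of n] by linarith
      qed
      then have "(norm (ys n - xk))\<^sup>2 \<le> 2 * s * (m + 1 - fs)" using s by (simp add: field_simps)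
      then show ?thesis by (simp add: real_le_rsqrt)
    qed
    then have "norm (ys n) \<le> norm xk + sqrt (2 * s * (m + 1 - fs))" for n
      using norm_triangle_sub[of "ys n" xk] by (smt (verit))
    then show ?thesis unfolding bounded_iff by blast
  qed
  then obtain l r where r: "strict_mono r" and lim: "(ys \<circ> r) \<longlonglongrightarrow> l"
    using bounded_imp_convergent_subsequence by blast
  have lim': "(\<lambda>n. ys (r n)) \<longlonglongrightarrow> l" using lim by (simp add: comp_def)
  have Fk_lim: "(\<lambda>n. Fk s xk (ys (r n))) \<longlonglongrightarrow> m"
  proof (rule tendsto_sandwich[of "\<lambda>n. m" _ _ "\<lambda>n. m + 1 / Suc n"])
    show "\<forall>\<^sub>F n in sequentially. m \<le> Fk s xk (ys (r n))" using mle ys(1) by simp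
    show "\<forall>\<^sub>F n in sequentially. Fk s xk (ys (r n)) \<le> m + 1 / Suc n"
    proof (rule always_eventually, rule allI)
      fix n
      have "n \<le> r n" using r by (rule seq_suble)
      then have "1 / real (Suc (r n)) \<le> 1 / Suc n" by (simp add: frac_le)
      then show "Fk s xk (ys (r n)) \<le> m + 1 / Suc n" using ys(2)[of "r n"] by linarith
    qed
    show "(\<lambda>n. m + 1 / real (Suc n)) \<longlonglongrightarrow> m"
      using LIMSEQ_inverse_real_of_nat_add[of m] by (simp add: inverse_eq_divide add.commute)
  qed simp
  define tt where "tt n = (Fk s xk (ys (r n)) - h (A *v ys (r n)) + c \<bullet> ys (r n) - (norm (E (ys (r n) - xk)))\<^sup>2 / (2 * s)) / lam" for n
  define t0 where "t0 = (m - h (A *v l) + c \<bullet> l - (norm (E (l - xk)))\<^sup>2 / (2 * s)) / lam"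
  have tt_P: "tt n = P (ys (r n))" for n
    unfolding tt_def Fk_def F0_def using lam_pos s by (simp add: field_simps)
  have "tt \<longlonglongrightarrow> t0"
    unfolding tt_def t0_def E_sq
    by (intro tendsto_intros Fk_lim isCont_tendsto_compose[OF h_isCont] lim') (use lam_pos s in auto)
  moreover have "p (ys (r n)) \<le> ereal (tt n)" for n using p_fin[OF ys(1)] tt_P by simp
  ultimately have pl: "p l \<le> ereal t0"
    using epi_lsc[OF _ lim'] p_closed unfolding ext_closed_def by blast
  then have lD: "l \<in> D" by (auto simp: D_def)
  then have "P l \<le> t0" using pl p_fin by fastforce
  then have "Fk s xk l \<le> m"
    unfolding Fk_def F0_def t0_def using lam_pos by (simp add: field_simps)
  then show ?thesis using lD mle by force
qed

lemma three_point:
  assumes s: "s > 0" and xb: "xb \<in> D" and mn: "\<forall>y\<in>D. Fk s xk xb \<le> Fk s xk y" and y: "y \<in> D"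
  shows "F0 xb + ((E xk - E xb) \<bullet> (E y - E xb)) / s \<le> F0 y"
    and "Fk s xk xb + (norm (E y - E xb))\<^sup>2 / (2 * s) \<le> Fk s xk y"
proof -
  define d where "d = y - xb"
  define N0 where "N0 = (norm (E (xb - xk)))\<^sup>2"
  define G where "G = E (xb - xk) \<bullet> E d"
  define Nd where "Nd = (norm (E d))\<^sup>2"
  have expand: "(norm (E (xb + t *\<^sub>R d - xk)))\<^sup>2 = N0 + 2 * t * G + t\<^sup>2 * Nd" for t
  proof -
    have "E (xb + t *\<^sub>R d - xk) = E (xb - xk) + t *\<^sub>R E d"
      by (metis E_add E_scale add_diff_eq diff_add_eq)
    then show ?thesis unfolding N0_def G_def Nd_def
      by (simp add: norm_add_sq power_mult_distrib)
  qed
  have main: "0 \<le> (F0 y - F0 xb + G / s) + t * (Nd / (2 * s))" if t: "0 < t" "t \<le> 1" for t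
  proof -
    have zt: "(1-t) *\<^sub>R xb + t *\<^sub>R y = xb + t *\<^sub>R d" by (simp add: d_def algebra_simps)
    have inD: "xb + t *\<^sub>R d \<in> D" using P_convex[OF xb y, of t] t zt by simp
    have cvx: "F0 (xb + t *\<^sub>R d) \<le> (1-t) * F0 xb + t * F0 y" using F0_convex[OF xb y, of t] t zt by simp
    have "Fk s xk xb \<le> Fk s xk (xb + t *\<^sub>R d)" using mn inD by blast
    then have "F0 xb + N0 / (2 * s) \<le> F0 (xb + t *\<^sub>R d) + (N0 + 2 * t * G + t\<^sup>2 * Nd) / (2 * s)"
      by (simp add: Fk_def expand N0_def)
    with cvx have "F0 xb + N0 / (2 * s) \<le> (1-t) * F0 xb + t * F0 y + (N0 + 2 * t * G + t\<^sup>2 * Nd) / (2 * s)"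
      by linarith
    moreover have "(N0 + 2 * t * G + t\<^sup>2 * Nd) / (2 * s) = N0 / (2 * s) + t * (G / s) + t * (t * (Nd / (2 * s)))"
      using s by (simp add: field_simps power2_eq_square)
    moreover have "t * ((F0 y - F0 xb + G / s) + t * (Nd / (2 * s))) = t * F0 y - t * F0 xb + t * (G / s) + t * (t * (Nd / (2 * s)))"
      by (simp add: algebra_simps)
    moreover have "(1-t) * F0 xb = F0 xb - t * F0 xb" by (simp add: algebra_simps)
    ultimately have "0 \<le> t * ((F0 y - F0 xb + G / s) + t * (Nd / (2 * s)))"
      by (smt (verit))
    then show ?thesis using t by (simp add: zero_le_mult_iff)
  qed
  have a: "0 \<le> F0 y - F0 xb + G / s" using small_t main by blast
  have G': "G = - ((E xk - E xb) \<bullet> (E y - E xb))"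
    unfolding G_def d_def E_diff by (simp add: inner_diff_left inner_diff_right algebra_simps)
  show "F0 xb + ((E xk - E xb) \<bullet> (E y - E xb)) / s \<le> F0 y" using a G' by (simp add: field_simps)
  have "(norm (E (y - xk)))\<^sup>2 = N0 + 2 * G + Nd"
    using expand[of 1] by (simp add: d_def)
  moreover have "Nd = (norm (E y - E xb))\<^sup>2" by (simp add: Nd_def d_def E_diff)
  moreover have "(N0 + 2 * G + Nd) / (2 * s) = N0 / (2 * s) + G / s + Nd / (2 * s)"
    using s by (simp add: field_simps)
  ultimately show "Fk s xk xb + (norm (E y - E xb))\<^sup>2 / (2 * s) \<le> Fk s xk y"
    unfolding Fk_def N0_def using a by (simp add: E_diff)
qed

lemma subgrad:
  assumes s: "s > 0" and xb: "xb \<in> D" and mn: "\<forall>y\<in>D. Fk s xk xb \<le> Fk s xk y"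
  shows "(1 / s) *\<^sub>R (Mt *v (xk - xb)) \<in> subdiff (obj A c lam h p) xb"
  unfolding subdiff_def
proof (intro CollectI conjI allI)
  show "obj A c lam h p xb < \<infinity>" using obj_D[OF xb] by simp
  fix y
  show "obj A c lam h p xb + ereal ((1 / s) *\<^sub>R (Mt *v (xk - xb)) \<bullet> (y - xb)) \<le> obj A c lam h p y"
  proof (cases "y \<in> D")
    case True
    have "(Mt *v (xk - xb)) \<bullet> (y - xb) = (E xk - E xb) \<bullet> (E y - E xb)"
      by (metis E_inner E_diff)
    then show ?thesis using three_point(1)[OF s xb mn True] obj_D[OF xb] obj_D[OF True] by simp
  next
    case False
    then show ?thesis using obj_notD[OF False] obj_D[OF xb] by simp
  qed
qed

end


lemma qfejer_bound:
  fixes a e :: "nat \<Rightarrow> real"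
  assumes "\<And>k. a (Suc k) \<le> a k + e k"
  shows "a k \<le> a 0 + (\<Sum>j<k. e j)"
proof (induction k)
  case (Suc k) then show ?case using assms[of k] by simp
qed simp

lemma qfejer_bound2:
  fixes a e :: "nat \<Rightarrow> real"
  assumes "\<And>k. a (Suc k) \<le> a k + e k" "\<And>k. 0 \<le> e k" "summable e"
  shows "a k \<le> a 0 + suminf e"
proof -
  have "(\<Sum>j<k. e j) \<le> suminf e" using assms by (intro sum_le_suminf) auto
  moreover have "a k \<le> a 0 + (\<Sum>j<k. e j)" by (rule qfejer_bound) (rule assms(1))
  ultimately show ?thesis by linarith
qed

lemma qfejer_conv:
  fixes a e :: "nat \<Rightarrow> real"
  assumes "\<And>k. a (Suc k) \<le> a k + e k" "\<And>k. 0 \<le> a k" "\<And>k. 0 \<le> e k" "summable e"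
  shows "\<exists>L. a \<longlonglongrightarrow> L"
proof -
  define b where "b k = a k - (\<Sum>j<k. e j)" for k
  have "decseq b" unfolding decseq_Suc_iff b_def using assms(1) by (simp add: algebra_simps)
  moreover have "\<forall>i. - suminf e \<le> b i"
  proof
    fix i
    have "(\<Sum>j<i. e j) \<le> suminf e" using assms by (intro sum_le_suminf) auto
    then show "- suminf e \<le> b i" using assms(2)[of i] by (simp add: b_def)
  qed
  ultimately obtain Lb where "b \<longlonglongrightarrow> Lb" using decseq_convergent by blast
  then have "(\<lambda>k. b k + (\<Sum>j<k. e j)) \<longlonglongrightarrow> Lb + suminf e"
    using summable_LIMSEQ[OF assms(4)] by (intro tendsto_add)
  then show ?thesis by (auto simp: b_def)
qed

context prob begin

definition "xbar s xk = (SOME xb. xb \<in> D \<and> (\<forall>y\<in>D. Fk s xk xb \<le> Fk s xk y))"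

lemma xbar: "s > 0 \<Longrightarrow> xbar s xk \<in> D \<and> (\<forall>y\<in>D. Fk s xk (xbar s xk) \<le> Fk s xk y)"
proof -
  assume s: "s > 0"
  have "\<exists>xb. xb \<in> D \<and> (\<forall>y\<in>D. Fk s xk xb \<le> Fk s xk y)" using Fk_min[OF s, of xk] by blast
  then show ?thesis unfolding xbar_def by (rule someI_ex)
qed

definition "Om = {z. \<forall>y. obj A c lam h p z \<le> obj A c lam h p y}"

lemma Om_D: "z \<in> Om \<Longrightarrow> z \<in> D"
proof (rule ccontr)
  assume z: "z \<in> Om" "z \<notin> D"
  obtain x1 where "p x1 \<noteq> \<infinity>" using p_proper unfolding ext_proper_def by blast
  then have x1: "x1 \<in> D" by (simp add: D_def)
  have "obj A c lam h p z \<le> obj A c lam h p x1" using z(1) unfolding Om_def by blast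
  then show False using obj_notD[OF z(2)] obj_D[OF x1] by simp
qed

lemma Om_le: "z \<in> Om \<Longrightarrow> y \<in> D \<Longrightarrow> F0 z \<le> F0 y"
proof -
  assume z: "z \<in> Om" and y: "y \<in> D"
  have "obj A c lam h p z \<le> obj A c lam h p y" using z unfolding Om_def by blast
  then show ?thesis using obj_D[OF Om_D[OF z]] obj_D[OF y] by simp
qed

lemma step_gen:
  assumes s: "s > 0"
    and cr: "fk A c lam h p tau s xk x' - ereal (psik A c lam h p tau s xk u) \<le> ereal R"
  shows "x' \<in> D \<and> (norm (E x' - E (xbar s xk)))\<^sup>2 / (2 * s) \<le> R"
proof -
  have x'D: "x' \<in> D"
  proof (rule ccontr)
    assume "x' \<notin> D"
    then show False using cr fk_eq(2)[OF s, of x' xk] by simp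
  qed
  let ?xb = "xbar s xk"
  have xb: "?xb \<in> D" "\<forall>y\<in>D. Fk s xk ?xb \<le> Fk s xk y" using xbar[OF s] by auto
  have "Fk s xk x' - psik A c lam h p tau s xk u \<le> R" using cr fk_eq(1)[OF s x'D, of xk] by simp
  moreover have "psik A c lam h p tau s xk u \<le> Fk s xk ?xb" by (rule weak_dual[OF s xb(1)])
  moreover have "Fk s xk ?xb + (norm (E x' - E ?xb))\<^sup>2 / (2 * s) \<le> Fk s xk x'"
    by (rule three_point(2)[OF s xb x'D])
  ultimately show ?thesis using x'D by linarith
qed

lemma step_A:
  assumes s: "s > 0" and e: "e \<ge> 0"
    and cr: "fk A c lam h p tau s xk x' - ereal (psik A c lam h p tau s xk u) \<le> ereal (e\<^sup>2 / (2 * s))"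
  shows "x' \<in> D \<and> norm (E x' - E (xbar s xk)) \<le> e"
proof -
  from step_gen[OF s cr] have "x' \<in> D" "(norm (E x' - E (xbar s xk)))\<^sup>2 / (2 * s) \<le> e\<^sup>2 / (2 * s)" by auto
  then have "(norm (E x' - E (xbar s xk)))\<^sup>2 \<le> e\<^sup>2" using s by (simp add: divide_le_cancel)
  then have "norm (E x' - E (xbar s xk)) \<le> e" by (rule power2_le_imp_le) (use e in auto)
  then show ?thesis using \<open>x' \<in> D\<close> by simp
qed

lemma step_B:
  assumes s: "s > 0" and e: "dl \<ge> 0"
    and cr: "fk A c lam h p tau s xk x' - ereal (psik A c lam h p tau s xk u)
        \<le> ereal (dl\<^sup>2 / (2 * s) * (norm (x' - xk))\<^sup>2 + tau * dl\<^sup>2 / (2 * s) * (norm (A *v x' - A *v xk))\<^sup>2)"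
  shows "norm (E x' - E (xbar s xk)) \<le> dl * norm (E x' - E xk)"
proof -
  have "dl\<^sup>2 / (2 * s) * (norm (x' - xk))\<^sup>2 + tau * dl\<^sup>2 / (2 * s) * (norm (A *v x' - A *v xk))\<^sup>2
      = (dl * norm (E x' - E xk))\<^sup>2 / (2 * s)"
    unfolding E_diff[symmetric] power_mult_distrib E_sq by (simp add: matrix_vector_mult_diff_distrib add_divide_distrib distrib_left mult.assoc mult.left_commute)
  with step_gen[OF s cr] have "(norm (E x' - E (xbar s xk)))\<^sup>2 / (2 * s) \<le> (dl * norm (E x' - E xk))\<^sup>2 / (2 * s)" by simp
  then have "(norm (E x' - E (xbar s xk)))\<^sup>2 \<le> (dl * norm (E x' - E xk))\<^sup>2" using s by (simp add: divide_le_cancel)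
  then show ?thesis by (rule power2_le_imp_le) (use e in auto)
qed

lemma fejer:
  assumes s: "s > 0" and z: "z \<in> Om"
  shows "(norm (E xk - E (xbar s xk)))\<^sup>2 + (norm (E (xbar s xk) - E z))\<^sup>2 \<le> (norm (E xk - E z))\<^sup>2"
proof -
  let ?xb = "xbar s xk"
  have xb: "?xb \<in> D" "\<forall>y\<in>D. Fk s xk ?xb \<le> Fk s xk y" using xbar[OF s] by auto
  have zD: "z \<in> D" by (rule Om_D[OF z])
  have "Fk s xk ?xb + (norm (E z - E ?xb))\<^sup>2 / (2 * s) \<le> Fk s xk z" by (rule three_point(2)[OF s xb zD])
  moreover have "F0 z \<le> F0 ?xb" by (rule Om_le[OF z xb(1)])
  ultimately have "(norm (E (?xb - xk)))\<^sup>2 / (2 * s) + (norm (E z - E ?xb))\<^sup>2 / (2 * s) \<le> (norm (E (z - xk)))\<^sup>2 / (2 * s)"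
    unfolding Fk_def by linarith
  then have "(norm (E (?xb - xk)))\<^sup>2 + (norm (E z - E ?xb))\<^sup>2 \<le> (norm (E (z - xk)))\<^sup>2"
    using s by (simp add: add_divide_distrib[symmetric] divide_le_cancel)
  then show ?thesis by (simp add: E_diff norm_minus_commute)
qed

end


context prob begin

lemma E_tendsto [tendsto_intros]: "(f \<longlongrightarrow> l) F \<Longrightarrow> ((\<lambda>n. E (f n)) \<longlongrightarrow> E l) F"
  unfolding E_def by (intro tendsto_intros)

lemma Om_ne: "Om \<noteq> {}" using fmin by (auto simp: Om_def)

lemma part1:
  fixes sigma eps :: "nat \<Rightarrow> real" and x :: "nat \<Rightarrow> real^'n" and u :: "nat \<Rightarrow> real^'m"
  assumes sp: "\<And>k. sigma k > 0" and sm: "mono sigma" and en: "\<And>k. eps k \<ge> 0" and es: "summable eps"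
    and cr: "\<And>k. fk A c lam h p tau (sigma k) (x k) (x (Suc k))
              - ereal (psik A c lam h p tau (sigma k) (x k) (u (Suc k)))
            \<le> ereal ((eps k)\<^sup>2 / (2 * sigma k))"
  shows "bounded (range x) \<and> (\<exists>xs\<in>Om. x \<longlonglongrightarrow> xs)"
proof -
  define xb where "xb k = xbar (sigma k) (x k)" for k
  have xbD: "xb k \<in> D" and xbmin: "\<forall>y\<in>D. Fk (sigma k) (x k) (xb k) \<le> Fk (sigma k) (x k) y" for k
    using xbar[OF sp[of k], of "x k"] by (auto simp: xb_def)
  have F1: "norm (E (x (Suc k)) - E (xb k)) \<le> eps k" for k
    using step_A[OF sp en cr] by (simp add: xb_def)
  have F2: "(norm (E (x k) - E (xb k)))\<^sup>2 + (norm (E (xb k) - E z))\<^sup>2 \<le> (norm (E (x k) - E z))\<^sup>2"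
    if "z \<in> Om" for z k
    using fejer[OF sp that, of "x k"] by (simp add: xb_def)
  have F2': "norm (E (xb k) - E z) \<le> norm (E (x k) - E z)" if "z \<in> Om" for z k
  proof -
    have "(norm (E (xb k) - E z))\<^sup>2 \<le> (norm (E (x k) - E z))\<^sup>2" using F2[OF that, of k]
      by (smt (verit) zero_le_power2)
    then show ?thesis by (rule power2_le_imp_le) simp
  qed
  have F3: "norm (E (x (Suc k)) - E z) \<le> norm (E (x k) - E z) + eps k" if "z \<in> Om" for z k
  proof -
    have "norm (E (x (Suc k)) - E z) \<le> eps k + norm (E (x k) - E z)"
      by (rule norm_diff_triangle_le[OF F1 F2'[OF that]])
    then show ?thesis by simp
  qed
  obtain z0 where z0: "z0 \<in> Om" using Om_ne by blast
  have bnd: "norm (E (x k) - E z0) \<le> norm (E (x 0) - E z0) + suminf eps" for k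
    by (rule qfejer_bound2[of "\<lambda>k. norm (E (x k) - E z0)" eps]) (use F3[OF z0] en es in auto)
  have bdd: "bounded (range x)"
  proof -
    have "norm (x k) \<le> norm z0 + (norm (E (x 0) - E z0) + suminf eps)" for k
    proof -
      have "norm (x k) \<le> norm z0 + norm (x k - z0)" by (metis norm_triangle_sub add.commute)
      also have "norm (x k - z0) \<le> norm (E (x k) - E z0)" using norm_le_E[of "x k - z0"] by (simp add: E_diff)
      finally show ?thesis using bnd[of k] by linarith
    qed
    then show ?thesis unfolding bounded_iff by blast
  qed
  have conv: "\<exists>L. (\<lambda>k. norm (E (x k) - E z)) \<longlonglongrightarrow> L" if "z \<in> Om" for z
    by (rule qfejer_conv) (use F3[OF that] en es in auto)
  have gap: "(\<lambda>k. norm (E (x k) - E (xb k))) \<longlonglongrightarrow> 0"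
  proof -
    define a where "a k = norm (E (x k) - E z0)" for k
    define b where "b k = norm (E (xb k) - E z0)" for k
    have "\<exists>L. a \<longlonglongrightarrow> L" unfolding a_def[abs_def] by (rule conv[OF z0])
    then obtain L where aL: "a \<longlonglongrightarrow> L" by blast
    have lo: "(\<lambda>k. a (Suc k) - eps k) \<longlonglongrightarrow> L - 0"
      by (intro tendsto_diff summable_LIMSEQ_zero[OF es]) (use aL LIMSEQ_Suc in blast)
    have bL: "b \<longlonglongrightarrow> L"
    proof (rule tendsto_sandwich[OF _ _ lo[simplified] aL])
      show "\<forall>\<^sub>F n in sequentially. a (Suc n) - eps n \<le> b n"
      proof (rule always_eventually, rule allI)
        fix n
        have "a (Suc n) \<le> eps n + b n" unfolding a_def b_def
          by (rule norm_diff_triangle_le[OF F1 order_refl])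
        then show "a (Suc n) - eps n \<le> b n" by simp
      qed
      show "\<forall>\<^sub>F n in sequentially. b n \<le> a n"
        using F2'[OF z0] by (simp add: a_def b_def)
    qed
    have sq: "(\<lambda>k. (norm (E (x k) - E (xb k)))\<^sup>2) \<longlonglongrightarrow> 0"
    proof (rule tendsto_sandwich[of "\<lambda>k. 0" _ _ "\<lambda>k. (a k)\<^sup>2 - (b k)\<^sup>2"])
      show "\<forall>\<^sub>F n in sequentially. 0 \<le> (norm (E (x n) - E (xb n)))\<^sup>2" by simp
      show "\<forall>\<^sub>F n in sequentially. (norm (E (x n) - E (xb n)))\<^sup>2 \<le> (a n)\<^sup>2 - (b n)\<^sup>2"
        using F2[OF z0] by (simp add: a_def b_def algebra_simps)
      have "(\<lambda>k. (a k)\<^sup>2 - (b k)\<^sup>2) \<longlonglongrightarrow> L\<^sup>2 - L\<^sup>2" by (intro tendsto_intros aL bL)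
      then show "(\<lambda>k. (a k)\<^sup>2 - (b k)\<^sup>2) \<longlonglongrightarrow> 0" by simp
    qed simp
    have "(\<lambda>k. sqrt ((norm (E (x k) - E (xb k)))\<^sup>2)) \<longlonglongrightarrow> sqrt 0" by (intro tendsto_intros sq)
    then show ?thesis by simp
  qed
  obtain l r where r: "strict_mono r" and lr0: "(x \<circ> r) \<longlonglongrightarrow> l"
    using bounded_imp_convergent_subsequence[OF bdd] by blast
  have lr: "(\<lambda>n. x (r n)) \<longlonglongrightarrow> l" using lr0 by (simp add: comp_def)
  have gapr: "(\<lambda>n. norm (E (x (r n)) - E (xb (r n)))) \<longlonglongrightarrow> 0"
    using LIMSEQ_subseq_LIMSEQ[OF gap r] by (simp add: comp_def)
  have xbl: "(\<lambda>n. xb (r n)) \<longlonglongrightarrow> l"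
  proof -
    have "(\<lambda>n. xb (r n) - x (r n)) \<longlonglongrightarrow> 0"
    proof (rule tendsto_0_le[OF gapr, of _ 1])
      show "\<forall>\<^sub>F n in sequentially. norm (xb (r n) - x (r n)) \<le> norm (norm (E (x (r n)) - E (xb (r n)))) * 1"
        using norm_le_E by (intro always_eventually allI) (simp add: E_diff[symmetric] norm_minus_commute)
    qed
    then have "(\<lambda>n. x (r n) + (xb (r n) - x (r n))) \<longlonglongrightarrow> l + 0" by (intro tendsto_intros lr)
    then show ?thesis by simp
  qed
  have key: "l \<in> D \<and> F0 l \<le> F0 y" if y: "y \<in> D" for y
  proof -
    define rho where "rho n = ((E (x (r n)) - E (xb (r n))) \<bullet> (E y - E (xb (r n)))) / sigma (r n)" for n
    have tp: "F0 (xb (r n)) + rho n \<le> F0 y" for n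
      using three_point(1)[OF sp xbD xbmin y] by (simp add: rho_def)
    have rho0: "rho \<longlonglongrightarrow> 0"
    proof (rule tendsto_0_le[of "\<lambda>n. norm (E (x (r n)) - E (xb (r n))) * norm (E y - E (xb (r n))) / sigma 0" _ _ 1])
      have "(\<lambda>n. norm (E (x (r n)) - E (xb (r n))) * norm (E y - E (xb (r n))) / sigma 0)
          \<longlonglongrightarrow> 0 * norm (E y - E l) / sigma 0"
        by (intro tendsto_intros gapr xbl) (use sp[of 0] in auto)
      then show "(\<lambda>n. norm (E (x (r n)) - E (xb (r n))) * norm (E y - E (xb (r n))) / sigma 0) \<longlonglongrightarrow> 0"
        by simp
      show "\<forall>\<^sub>F n in sequentially. norm (rho n) \<le> norm (norm (E (x (r n)) - E (xb (r n))) * norm (E y - E (xb (r n))) / sigma 0) * 1"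
      proof (rule always_eventually, rule allI)
        fix n
        have s0: "sigma 0 \<le> sigma (r n)" using sm by (simp add: mono_def)
        have "\<bar>rho n\<bar> = \<bar>(E (x (r n)) - E (xb (r n))) \<bullet> (E y - E (xb (r n)))\<bar> / sigma (r n)"
          using sp[of "r n"] by (simp add: rho_def abs_div)
        also have "\<dots> \<le> norm (E (x (r n)) - E (xb (r n))) * norm (E y - E (xb (r n))) / sigma (r n)"
          using sp[of "r n"] by (intro divide_right_mono Cauchy_Schwarz_ineq2) auto
        also have "\<dots> \<le> norm (E (x (r n)) - E (xb (r n))) * norm (E y - E (xb (r n))) / sigma 0"
          using sp[of 0] s0 by (intro divide_left_mono) auto
        finally show "norm (rho n) \<le> norm (norm (E (x (r n)) - E (xb (r n))) * norm (E y - E (xb (r n))) / sigma 0) * 1"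
          by (simp only: real_norm_def abs_mult abs_divide abs_norm_cancel abs_of_pos[OF sp[of 0]] mult_1_right)
      qed
    qed
    define tt where "tt n = (F0 y - rho n - h (A *v xb (r n)) + c \<bullet> xb (r n)) / lam" for n
    define t0 where "t0 = (F0 y - h (A *v l) + c \<bullet> l) / lam"
    have ptt: "p (xb (r n)) \<le> ereal (tt n)" for n
    proof -
      have "lam * P (xb (r n)) \<le> F0 y - rho n - h (A *v xb (r n)) + c \<bullet> xb (r n)"
        using tp[of n] unfolding F0_def by linarith
      then have "P (xb (r n)) \<le> tt n" unfolding tt_def using lam_pos by (simp add: field_simps)
      then show ?thesis using p_fin[OF xbD] by simp
    qed
    have "tt \<longlonglongrightarrow> (F0 y - 0 - h (A *v l) + c \<bullet> l) / lam"
      unfolding tt_def by (intro tendsto_intros rho0 isCont_tendsto_compose[OF h_isCont] xbl) (use lam_pos in auto)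
    then have ttl: "tt \<longlonglongrightarrow> t0" by (simp add: t0_def)
    have pl: "p l \<le> ereal t0"
      using epi_lsc[OF _ xbl ttl ptt] p_closed unfolding ext_closed_def by blast
    then have lD: "l \<in> D" by (auto simp: D_def)
    then have "P l \<le> t0" using pl p_fin by fastforce
    then have "lam * P l \<le> F0 y - h (A *v l) + c \<bullet> l" unfolding t0_def using lam_pos by (simp add: field_simps)
    then show ?thesis using lD unfolding F0_def by linarith
  qed
  have lOm: "l \<in> Om"
    unfolding Om_def
  proof (intro CollectI allI)
    fix y
    obtain y0 where "y0 \<in> D" using D_ne by blast
    then have lD: "l \<in> D" using key by blast
    show "obj A c lam h p l \<le> obj A c lam h p y"
    proof (cases "y \<in> D")
      case True then show ?thesis using key[OF True] obj_D[OF lD] obj_D[OF True] by simp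
    next
      case False then show ?thesis using obj_notD[OF False] by simp
    qed
  qed
  obtain L where L: "(\<lambda>k. norm (E (x k) - E l)) \<longlonglongrightarrow> L" using conv[OF lOm] by blast
  have l1: "(\<lambda>n. norm (E (x (r n)) - E l)) \<longlonglongrightarrow> norm (E l - E l)" by (intro tendsto_intros lr)
  have l2: "(\<lambda>n. norm (E (x (r n)) - E l)) \<longlonglongrightarrow> L"
    using LIMSEQ_subseq_LIMSEQ[OF L r] by (simp add: comp_def)
  have "L = norm (E l - E l)" by (rule LIMSEQ_unique[OF l2 l1])
  then have L0: "L = 0" by simp
  have "(\<lambda>k. x k - l) \<longlonglongrightarrow> 0"
  proof (rule tendsto_0_le[of "\<lambda>k. norm (E (x k) - E l)" _ _ 1])
    show "(\<lambda>k. norm (E (x k) - E l)) \<longlonglongrightarrow> 0" using L L0 by simp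
    show "\<forall>\<^sub>F k in sequentially. norm (x k - l) \<le> norm (norm (E (x k) - E l)) * 1"
      by (intro always_eventually allI) (simp add: E_diff[symmetric] norm_le_E)
  qed
  then have "x \<longlonglongrightarrow> l" by (simp add: LIM_zero_iff)
  then show ?thesis using bdd lOm by blast
qed

end


lemma t1: fixes dl K R d :: real assumes "dl < 1"
  shows "(1 + dl) * (K / R * d) / (1 - dl) + dl * d / (1 - dl) = (1 / (1 - dl)) * (dl + (1 + dl) * K / R) * d"
proof -
  have "(1 + dl) * (K / R * d) / (1 - dl) + dl * d / (1 - dl) = ((1 + dl) * (K / R * d) + dl * d) / (1 - dl)"
    by (simp add: add_divide_distrib)
  also have "(1 + dl) * (K / R * d) + dl * d = (dl + (1 + dl) * K / R) * d" by (simp add: algebra_simps)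
  finally show ?thesis by simp
qed

lemma rate_step:
  fixes dl K s Db sg e d d' :: real
  assumes dl: "0 \<le> dl" "dl < 1" and K: "K > 0" and s: "s > 0"
    and nn: "0 \<le> Db" "0 \<le> sg" "0 \<le> e" "0 \<le> d"
    and h1: "Db\<^sup>2 \<le> d\<^sup>2 - sg\<^sup>2" and h2: "Db \<le> K * sg / s"
    and h3: "e \<le> dl * (e + sg)" and h4: "d' \<le> Db + e"
  shows "d' \<le> (1 / (1 - dl)) * (dl + (1 + dl) * K / sqrt (s\<^sup>2 + K\<^sup>2)) * d"
proof -
  define R where "R = sqrt (s\<^sup>2 + K\<^sup>2)"
  have Rpos: "R > 0" unfolding R_def using s by (simp add: add_pos_nonneg)
  have R2: "R\<^sup>2 = s\<^sup>2 + K\<^sup>2" unfolding R_def by (simp add: add_nonneg_nonneg)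
  have sgd: "sg \<le> d"
  proof -
    have "sg\<^sup>2 \<le> d\<^sup>2" using h1 zero_le_power2[of Db] by linarith
    then show ?thesis by (rule power2_le_imp_le) (use nn in auto)
  qed
  have a: "Db * s \<le> K * sg" using h2 s by (simp add: pos_le_divide_eq)
  have "(Db * s)\<^sup>2 \<le> (K * sg)\<^sup>2" using a nn s by (intro power_mono) auto
  then have "Db\<^sup>2 * s\<^sup>2 \<le> K\<^sup>2 * sg\<^sup>2" by (simp add: power_mult_distrib)
  also have "\<dots> \<le> K\<^sup>2 * (d\<^sup>2 - Db\<^sup>2)" using h1 by (intro mult_left_mono) auto
  finally have "Db\<^sup>2 * (s\<^sup>2 + K\<^sup>2) \<le> K\<^sup>2 * d\<^sup>2" by (simp add: algebra_simps)
  then have "(Db * R)\<^sup>2 \<le> (K * d)\<^sup>2" by (simp add: power_mult_distrib R2)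
  then have "Db * R \<le> K * d" by (rule power2_le_imp_le) (use K nn in auto)
  then have Dbd: "Db \<le> K / R * d" using Rpos by (simp add: field_simps)
  have "e * (1 - dl) \<le> dl * sg" using h3 by (simp add: algebra_simps)
  also have "\<dots> \<le> dl * d" using sgd dl by (intro mult_left_mono) auto
  finally have ed: "e \<le> dl * d / (1 - dl)" using dl by (simp add: field_simps)
  have th: "K / R * d \<le> (1 + dl) * (K / R * d) / (1 - dl)"
  proof -
    define q where "q = K / R * d"
    have "0 \<le> q" using K Rpos nn by (simp add: q_def)
    then have "q * (1 - dl) \<le> (1 + dl) * q" using dl by (simp add: algebra_simps)
    then have "q \<le> (1 + dl) * q / (1 - dl)" using dl by (simp add: le_divide_eq)
    then show ?thesis by (simp add: q_def)
  qed
  have "d' \<le> (1 + dl) * (K / R * d) / (1 - dl) + dl * d / (1 - dl)" using h4 Dbd ed th by linarith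
  also have "\<dots> = (1 / (1 - dl)) * (dl + (1 + dl) * K / R) * d" by (rule t1[OF dl(2)])
  finally show ?thesis unfolding R_def .
qed

context prob begin

lemma distM_eq: "Om \<noteq> {} \<Longrightarrow> distM Mt z Om = infdist (E z) (E ` Om)"
  unfolding distM_def infdist_def normM_E by (simp add: image_image dist_norm E_diff)

lemma part2_step:
  fixes s dl kappa eps0 :: real and xk x' x0 :: "real^'n" and u' :: "real^'m"
  assumes cpt: "compact Om" and s: "s > 0" and dl: "0 \<le> dl" "dl < 1" and kp: "kappa > 0" and e0: "eps0 \<ge> 0"
    and EB: "\<forall>z. infdist z Om \<le> R \<longrightarrow> subdiff (obj A c lam h p) z \<noteq> {} \<longrightarrow>
             infdist z Om \<le> kappa * infdist 0 (subdiff (obj A c lam h p) z)"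
    and dR: "distM Mt xk Om \<le> R"
    and crA: "fk A c lam h p tau s xk x' - ereal (psik A c lam h p tau s xk u') \<le> ereal (eps0\<^sup>2 / (2 * s))"
    and crB: "fk A c lam h p tau s xk x' - ereal (psik A c lam h p tau s xk u')
        \<le> ereal (dl\<^sup>2 / (2 * s) * (norm (x' - xk))\<^sup>2 + tau * dl\<^sup>2 / (2 * s) * (norm (A *v x' - A *v xk))\<^sup>2)"
  shows "distM Mt x' Om \<le> (1 / (1 - dl)) * (dl + (1 + dl) * kappa * (1 + tau * L) / sqrt (s\<^sup>2 + kappa\<^sup>2 * (1 + tau * L)\<^sup>2)) * distM Mt xk Om"
    and "distM Mt x' Om \<le> distM Mt xk Om + eps0"
proof -
  let ?z = "1 + tau * L"
  have zpos: "?z \<ge> 1" using L_nonneg tau_pos by simp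
  have z0: "?z \<ge> 0" using zpos by linarith
  have Omne: "Om \<noteq> {}" by (rule Om_ne)
  have Ec: "continuous_on UNIV E"
    unfolding E_def by (intro continuous_intros linear_continuous_on matrix_vector_mul_bounded_linear)
  have EOm: "compact (E ` Om)"
    by (rule compact_continuous_image[OF continuous_on_subset[OF Ec subset_UNIV] cpt])
  have EOmne: "E ` Om \<noteq> {}" using Omne by simp
  let ?xb = "xbar s xk"
  have xb: "?xb \<in> D" "\<forall>y\<in>D. Fk s xk ?xb \<le> Fk s xk y" using xbar[OF s] by auto
  define d where "d = infdist (E xk) (E ` Om)"
  define d' where "d' = infdist (E x') (E ` Om)"
  define Db where "Db = infdist (E ?xb) (E ` Om)"
  define sg where "sg = norm (E xk - E ?xb)"
  define e where "e = norm (E x' - E ?xb)"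
  obtain w where w: "w \<in> E ` Om" "d = dist (E xk) w"
    using infdist_attains_inf[OF compact_imp_closed[OF EOm] EOmne] d_def by metis
  then obtain zs where zs: "zs \<in> Om" "d = norm (E xk - E zs)" by (auto simp: dist_norm)
  have fj: "sg\<^sup>2 + (norm (E ?xb - E zs))\<^sup>2 \<le> d\<^sup>2" using fejer[OF s zs(1), of xk] zs(2) by (simp add: sg_def)
  have "Db \<le> norm (E ?xb - E zs)" unfolding Db_def using zs(1) infdist_le[of "E zs" "E ` Om" "E ?xb"] by (simp add: dist_norm)
  then have h1: "Db\<^sup>2 \<le> d\<^sup>2 - sg\<^sup>2" using fj by (smt (verit) Db_def infdist_nonneg power_mono)
  have Dbd: "Db \<le> d"
  proof -
    have "Db\<^sup>2 \<le> d\<^sup>2" using h1 zero_le_power2[of sg] by linarith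
    then show ?thesis by (rule power2_le_imp_le) (simp add: d_def infdist_nonneg)
  qed
  obtain w2 where w2: "w2 \<in> E ` Om" "Db = dist (E ?xb) w2"
    using infdist_attains_inf[OF compact_imp_closed[OF EOm] EOmne] Db_def by metis
  then obtain z2 where z2: "z2 \<in> Om" "Db = norm (E ?xb - E z2)" by (auto simp: dist_norm)
  have ixb: "infdist ?xb Om \<le> Db"
  proof -
    have "infdist ?xb Om \<le> dist ?xb z2" by (rule infdist_le[OF z2(1)])
    also have "\<dots> \<le> Db" using z2(2) norm_le_E[of "?xb - z2"] by (simp add: dist_norm E_diff)
    finally show ?thesis .
  qed
  have dM: "distM Mt xk Om = d" by (simp add: distM_eq[OF Omne] d_def)
  have inR: "infdist ?xb Om \<le> R" using ixb Dbd dR dM by linarith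
  define g where "g = (1 / s) *\<^sub>R (Mt *v (xk - ?xb))"
  have g: "g \<in> subdiff (obj A c lam h p) ?xb" unfolding g_def by (rule subgrad[OF s xb])
  have "infdist ?xb Om \<le> kappa * infdist 0 (subdiff (obj A c lam h p) ?xb)"
    using EB inR g by blast
  also have "\<dots> \<le> kappa * norm g"
    using infdist_le[OF g, of 0] kp by (intro mult_left_mono) auto
  finally have i1: "infdist ?xb Om \<le> kappa * norm g" .
  have ng: "norm g \<le> sqrt ?z * sg / s"
  proof -
    have "(norm (Mt *v (xk - ?xb)))\<^sup>2 \<le> (sqrt ?z * sg)\<^sup>2"
      using Mt_bound[of "xk - ?xb"] zpos by (simp add: power_mult_distrib sg_def E_diff)
    then have "norm (Mt *v (xk - ?xb)) \<le> sqrt ?z * sg" by (rule power2_le_imp_le) (use zpos in \<open>simp add: sg_def\<close>)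
    then show ?thesis using s by (simp add: g_def divide_right_mono)
  qed
  have ie: "infdist ?xb Om \<le> kappa * (sqrt ?z * sg / s)"
    using i1 mult_left_mono[OF ng, of kappa] kp by linarith
  have "Db \<le> sqrt ?z * infdist ?xb Om"
  proof -
    obtain z3 where z3: "z3 \<in> Om" "infdist ?xb Om = dist ?xb z3"
      using infdist_attains_inf[OF compact_imp_closed[OF cpt] Omne] by metis
    have "Db \<le> dist (E ?xb) (E z3)" unfolding Db_def using z3(1) by (intro infdist_le) simp
    also have "\<dots> = norm (E (?xb - z3))" by (simp add: dist_norm E_diff)
    also have "\<dots> \<le> sqrt ?z * norm (?xb - z3)" by (rule E_le)
    finally show ?thesis using z3(2) by (simp add: dist_norm)
  qed
  also have "\<dots> \<le> sqrt ?z * (kappa * (sqrt ?z * sg / s))" using ie z0 by (intro mult_left_mono) auto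
  also have "\<dots> = (sqrt ?z * sqrt ?z) * kappa * sg / s" by (simp add: algebra_simps)
  also have "\<dots> = kappa * ?z * sg / s" using z0 by simp
  finally have h2: "Db \<le> kappa * ?z * sg / s" .
  have "e \<le> dl * norm (E x' - E xk)" unfolding e_def by (rule step_B[OF s dl(1) crB])
  also have "norm (E x' - E xk) \<le> e + sg"
  proof (rule norm_diff_triangle_le)
    show "norm (E x' - E ?xb) \<le> e" by (simp add: e_def)
    show "norm (E ?xb - E xk) \<le> sg" by (simp add: sg_def norm_minus_commute)
  qed
  then have "dl * norm (E x' - E xk) \<le> dl * (e + sg)" using dl by (intro mult_left_mono) auto
  finally have h3: "e \<le> dl * (e + sg)" .
  have h4: "d' \<le> Db + e"
    unfolding d'_def Db_def e_def using infdist_triangle[of "E x'" "E ` Om" "E ?xb"] by (simp add: dist_norm)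
  have eA: "e \<le> eps0" unfolding e_def using step_A[OF s e0 crA] by simp
  have dM': "distM Mt x' Om = d'" by (simp add: distM_eq[OF Omne] d'_def)
  have "d' \<le> (1 / (1 - dl)) * (dl + (1 + dl) * (kappa * ?z) / sqrt (s\<^sup>2 + (kappa * ?z)\<^sup>2)) * d"
    by (rule rate_step[OF dl _ s _ _ _ _ h1 _ h3 h4])
       (use kp zpos h2 in \<open>auto simp: Db_def d_def sg_def e_def infdist_nonneg\<close>)
  then show "distM Mt x' Om \<le> (1 / (1 - dl)) * (dl + (1 + dl) * kappa * ?z / sqrt (s\<^sup>2 + kappa\<^sup>2 * ?z\<^sup>2)) * distM Mt xk Om"
    using dM dM' by (simp add: power_mult_distrib mult.assoc)
  show "distM Mt x' Om \<le> distM Mt xk Om + eps0" using dM dM' h4 Dbd eA by linarith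
qed

end


lemma theta_lim:
  fixes sigma :: "nat \<Rightarrow> real" and K :: real
  assumes sp: "\<And>k. sigma k > 0" and sm: "mono sigma" and K: "K > 0"
  defines "si \<equiv> (SUP k. ereal (sigma k))"
  shows "(\<lambda>k. K / sqrt ((sigma k)\<^sup>2 + K\<^sup>2)) \<longlonglongrightarrow> (if si = \<infinity> then 0 else K / sqrt ((real_of_ereal si)\<^sup>2 + K\<^sup>2))"
    and "(if si = \<infinity> then 0 else K / sqrt ((real_of_ereal si)\<^sup>2 + K\<^sup>2)) < 1"
proof -
  have inc: "incseq (\<lambda>k. ereal (sigma k))" using sm by (simp add: incseq_def mono_def)
  have lim: "(\<lambda>k. ereal (sigma k)) \<longlonglongrightarrow> si" unfolding si_def by (rule LIMSEQ_SUP[OF inc])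
  have ge: "ereal (sigma 0) \<le> si" unfolding si_def by (rule SUP_upper) simp
  have "(\<lambda>k. K / sqrt ((sigma k)\<^sup>2 + K\<^sup>2)) \<longlonglongrightarrow> (if si = \<infinity> then 0 else K / sqrt ((real_of_ereal si)\<^sup>2 + K\<^sup>2))
      \<and> (if si = \<infinity> then 0 else K / sqrt ((real_of_ereal si)\<^sup>2 + K\<^sup>2)) < 1"
  proof (cases "si = \<infinity>")
    case True
    have top: "filterlim sigma at_top sequentially"
      unfolding filterlim_at_top
    proof
      fix Z
      have "ereal Z < si" using True by simp
      then obtain k where "ereal Z < ereal (sigma k)" unfolding si_def by (auto simp: less_SUP_iff)
      then have "Z \<le> sigma k" by simp
      then have "\<forall>n\<ge>k. Z \<le> sigma n" using sm by (meson monoD order_trans)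
      then show "\<forall>\<^sub>F n in sequentially. Z \<le> sigma n" by (auto simp: eventually_sequentially)
    qed
    have "(\<lambda>k. K * inverse (sigma k)) \<longlonglongrightarrow> K * 0" by (intro tendsto_intros tendsto_inverse_0_at_top top)
    then have up: "(\<lambda>k. K / sigma k) \<longlonglongrightarrow> 0" by (simp add: divide_inverse)
    have "(\<lambda>k. K / sqrt ((sigma k)\<^sup>2 + K\<^sup>2)) \<longlonglongrightarrow> 0"
    proof (rule tendsto_sandwich[of "\<lambda>k. 0" _ _ "\<lambda>k. K / sigma k"])
      show "\<forall>\<^sub>F n in sequentially. 0 \<le> K / sqrt ((sigma n)\<^sup>2 + K\<^sup>2)" using K by simp
      show "\<forall>\<^sub>F n in sequentially. K / sqrt ((sigma n)\<^sup>2 + K\<^sup>2) \<le> K / sigma n"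
      proof (rule always_eventually, rule allI)
        fix n
        have "sigma n = sqrt ((sigma n)\<^sup>2)" using sp[of n] by simp
        also have "\<dots> \<le> sqrt ((sigma n)\<^sup>2 + K\<^sup>2)" by simp
        finally show "K / sqrt ((sigma n)\<^sup>2 + K\<^sup>2) \<le> K / sigma n"
          using K sp[of n] by (intro divide_left_mono) (auto intro!: mult_pos_pos add_pos_nonneg)
      qed
    qed (simp_all add: up)
    then show ?thesis using True by simp
  next
    case False
    have "si \<noteq> -\<infinity>" using ge by auto
    then obtain s where s: "si = ereal s" using False by (cases si) auto
    have spos: "s > 0" using ge s sp[of 0] by simp
    have "sigma \<longlonglongrightarrow> s" using lim s by simp
    then have "(\<lambda>k. K / sqrt ((sigma k)\<^sup>2 + K\<^sup>2)) \<longlonglongrightarrow> K / sqrt (s\<^sup>2 + K\<^sup>2)"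
      using K by (intro tendsto_intros) (auto simp: add_pos_nonneg)
    moreover have "K / sqrt (s\<^sup>2 + K\<^sup>2) < 1"
    proof -
      have "K = sqrt (K\<^sup>2)" using K by simp
      also have "\<dots> < sqrt (s\<^sup>2 + K\<^sup>2)" by (rule real_sqrt_less_mono) (use spos in simp)
      finally show ?thesis using K by (subst divide_less_eq_1_pos) (auto intro: add_nonneg_pos)
    qed
    ultimately show ?thesis using s by simp
  qed
  then show "(\<lambda>k. K / sqrt ((sigma k)\<^sup>2 + K\<^sup>2)) \<longlonglongrightarrow> (if si = \<infinity> then 0 else K / sqrt ((real_of_ereal si)\<^sup>2 + K\<^sup>2))"
    and "(if si = \<infinity> then 0 else K / sqrt ((real_of_ereal si)\<^sup>2 + K\<^sup>2)) < 1" by auto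
qed

context prob begin

lemma part2:
  fixes sigma eps delta :: "nat \<Rightarrow> real" and x :: "nat \<Rightarrow> real^'n" and u :: "nat \<Rightarrow> real^'m" and kappa :: real
  assumes cpt: "compact Om" and sp: "\<And>k. sigma k > 0" and en: "\<And>k. eps k \<ge> 0" and es: "summable eps"
    and dn: "\<And>k. 0 \<le> delta k" and dl1: "\<And>k. delta k < 1" and kp: "kappa > 0"
    and EB: "\<forall>z. infdist z Om \<le> suminf eps + distM Mt (x 0) Om \<longrightarrow> subdiff (obj A c lam h p) z \<noteq> {} \<longrightarrow>
             infdist z Om \<le> kappa * infdist 0 (subdiff (obj A c lam h p) z)"
    and crA: "\<And>k. fk A c lam h p tau (sigma k) (x k) (x (Suc k))
              - ereal (psik A c lam h p tau (sigma k) (x k) (u (Suc k)))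
            \<le> ereal ((eps k)\<^sup>2 / (2 * sigma k))"
    and crB: "\<And>k. fk A c lam h p tau (sigma k) (x k) (x (Suc k))
                  - ereal (psik A c lam h p tau (sigma k) (x k) (u (Suc k)))
                \<le> ereal ((delta k)\<^sup>2 / (2 * sigma k) * (norm (x (Suc k) - x k))\<^sup>2
                         + tau * (delta k)\<^sup>2 / (2 * sigma k) * (norm (A *v x (Suc k) - A *v x k))\<^sup>2)"
  shows "distM Mt (x (Suc k)) Om \<le> (1 / (1 - delta k)) * (delta k + (1 + delta k) * kappa * (1 + tau * L)
          / sqrt ((sigma k)\<^sup>2 + kappa\<^sup>2 * (1 + tau * L)\<^sup>2)) * distM Mt (x k) Om"
proof -
  define R where "R = suminf eps + distM Mt (x 0) Om"
  note step = part2_step[OF cpt sp dn dl1 kp en EB[folded R_def] _ crA crB]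
  have bnd: "distM Mt (x k) Om \<le> distM Mt (x 0) Om + (\<Sum>j<k. eps j)" for k
  proof (induction k)
    case (Suc k)
    have "(\<Sum>j<k. eps j) \<le> suminf eps" using en es by (intro sum_le_suminf) auto
    then have "distM Mt (x k) Om \<le> R" using Suc by (simp add: R_def)
    then have "distM Mt (x (Suc k)) Om \<le> distM Mt (x k) Om + eps k" by (rule step(2))
    then show ?case using Suc by simp
  qed simp
  have "(\<Sum>j<k. eps j) \<le> suminf eps" using en es by (intro sum_le_suminf) auto
  then have "distM Mt (x k) Om \<le> R" using bnd[of k] by (simp add: R_def)
  then show ?thesis by (rule step(1))
qed

end

theorem theorem2p1:
  fixes A :: "real^'n^'m" and c :: "real^'n" and lam tau :: real
    and h :: "real^'m \<Rightarrow> real" and p :: "real^'n \<Rightarrow> ereal"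
    and sigma eps delta :: "nat \<Rightarrow> real"
    and x :: "nat \<Rightarrow> real^'n" and u :: "nat \<Rightarrow> real^'m"
  defines "f \<equiv> obj A c lam h p"
  defines "Omega \<equiv> {z. \<forall>y. f z \<le> f y}"
  defines "sigma_inf \<equiv> (SUP k. ereal (sigma k))"
  defines "M \<equiv> mat 1 + tau *\<^sub>R (transpose A ** A)"
  defines "zeta \<equiv> 1 + tau * lambda_max (transpose A ** A)"
  assumes lam_pos: "lam > 0"
    and h_convex: "convex_on UNIV h" and h_C2: "C2_fun h"
    and p_closed: "ext_closed p" and p_proper: "ext_proper p" and p_convex: "ext_convex p"
    and Omega_ne: "Omega \<noteq> {}" and Omega_compact: "compact Omega"
    and tau_pos: "tau > 0"
    and sigma_pos: "\<forall>k. sigma k > 0" and sigma_mono: "mono sigma"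
    and eps_nonneg: "\<forall>k. eps k \<ge> 0" and eps_summable: "summable eps"
    and delta_nonneg: "\<forall>k. delta k \<ge> 0" and delta_summable: "summable delta"
    and delta_lt1: "\<forall>k. delta k < 1"
    and iter: "\<forall>k. x (Suc k) = prox (\<lambda>y. ereal (sigma k * lam) * p y)
                   (x k + sigma k *\<^sub>R c - sigma k *\<^sub>R (transpose A *v u (Suc k)))"
  shows
    "((\<forall>k. fk A c lam h p tau (sigma k) (x k) (x (Suc k))
              - ereal (psik A c lam h p tau (sigma k) (x k) (u (Suc k)))
            \<le> ereal ((eps k)\<^sup>2 / (2 * sigma k)))
       \<longrightarrow> bounded (range x) \<and> (\<exists>xs\<in>Omega. x \<longlonglongrightarrow> xs))
     \<and>
     (\<forall>kappa>0.
        (\<forall>z. infdist z Omega \<le> suminf eps + distM M (x 0) Omega \<longrightarrow> subdiff f z \<noteq> {} \<longrightarrow>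
             infdist z Omega \<le> kappa * infdist 0 (subdiff f z))
        \<longrightarrow> (\<forall>k. fk A c lam h p tau (sigma k) (x k) (x (Suc k))
                  - ereal (psik A c lam h p tau (sigma k) (x k) (u (Suc k)))
                \<le> ereal ((eps k)\<^sup>2 / (2 * sigma k)))
        \<longrightarrow> (\<forall>k. fk A c lam h p tau (sigma k) (x k) (x (Suc k))
                  - ereal (psik A c lam h p tau (sigma k) (x k) (u (Suc k)))
                \<le> ereal ((delta k)\<^sup>2 / (2 * sigma k) * (norm (x (Suc k) - x k))\<^sup>2
                         + tau * (delta k)\<^sup>2 / (2 * sigma k) * (norm (A *v x (Suc k) - A *v x k))\<^sup>2))
        \<longrightarrow> (let mu = (\<lambda>k. (1 / (1 - delta k)) * (delta k + (1 + delta k) * kappa * zeta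
                              / sqrt ((sigma k)\<^sup>2 + kappa\<^sup>2 * zeta\<^sup>2)));
                 mu_inf = (if sigma_inf = \<infinity> then 0
                           else kappa * zeta / sqrt ((real_of_ereal sigma_inf)\<^sup>2 + kappa\<^sup>2 * zeta\<^sup>2))
             in (\<forall>k. distM M (x (Suc k)) Omega \<le> mu k * distM M (x k) Omega)
                \<and> mu \<longlonglongrightarrow> mu_inf \<and> mu_inf < 1))"
  proof -
  have fmin: "\<exists>z. \<forall>y. obj A c lam h p z \<le> obj A c lam h p y"
    using Omega_ne unfolding Omega_def f_def by blast
  interpret P: prob A c lam tau h p
    by unfold_locales (use lam_pos tau_pos h_convex C2_cont[OF h_C2] p_closed p_proper p_convex fmin in auto)
  have Om: "P.Om = Omega" by (simp add: P.Om_def Omega_def f_def)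
  have Mt: "P.Mt = M" by (simp add: P.Mt_def M_def)
  have zeta: "zeta = 1 + tau * P.L" by (simp add: zeta_def P.L_def)
  have zpos: "zeta > 0" using zeta P.L_nonneg tau_pos by (simp add: add_pos_nonneg)
  show ?thesis
  proof (rule conjI)
    show "(\<forall>k. fk A c lam h p tau (sigma k) (x k) (x (Suc k))
              - ereal (psik A c lam h p tau (sigma k) (x k) (u (Suc k)))
            \<le> ereal ((eps k)\<^sup>2 / (2 * sigma k)))
       \<longrightarrow> bounded (range x) \<and> (\<exists>xs\<in>Omega. x \<longlonglongrightarrow> xs)"
    proof (rule impI)
      assume cr: "\<forall>k. fk A c lam h p tau (sigma k) (x k) (x (Suc k))
              - ereal (psik A c lam h p tau (sigma k) (x k) (u (Suc k)))
            \<le> ereal ((eps k)\<^sup>2 / (2 * sigma k))"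
      show "bounded (range x) \<and> (\<exists>xs\<in>Omega. x \<longlonglongrightarrow> xs)"
        using P.part1[of sigma eps x u] sigma_pos sigma_mono eps_nonneg eps_summable cr Om by blast
    qed
  next
    show "\<forall>kappa>0.
        (\<forall>z. infdist z Omega \<le> suminf eps + distM M (x 0) Omega \<longrightarrow> subdiff f z \<noteq> {} \<longrightarrow>
             infdist z Omega \<le> kappa * infdist 0 (subdiff f z))
        \<longrightarrow> (\<forall>k. fk A c lam h p tau (sigma k) (x k) (x (Suc k))
                  - ereal (psik A c lam h p tau (sigma k) (x k) (u (Suc k)))
                \<le> ereal ((eps k)\<^sup>2 / (2 * sigma k)))
        \<longrightarrow> (\<forall>k. fk A c lam h p tau (sigma k) (x k) (x (Suc k))
                  - ereal (psik A c lam h p tau (sigma k) (x k) (u (Suc k)))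
                \<le> ereal ((delta k)\<^sup>2 / (2 * sigma k) * (norm (x (Suc k) - x k))\<^sup>2
                         + tau * (delta k)\<^sup>2 / (2 * sigma k) * (norm (A *v x (Suc k) - A *v x k))\<^sup>2))
        \<longrightarrow> (let mu = (\<lambda>k. (1 / (1 - delta k)) * (delta k + (1 + delta k) * kappa * zeta
                              / sqrt ((sigma k)\<^sup>2 + kappa\<^sup>2 * zeta\<^sup>2)));
                 mu_inf = (if sigma_inf = \<infinity> then 0
                           else kappa * zeta / sqrt ((real_of_ereal sigma_inf)\<^sup>2 + kappa\<^sup>2 * zeta\<^sup>2))
             in (\<forall>k. distM M (x (Suc k)) Omega \<le> mu k * distM M (x k) Omega)
                \<and> mu \<longlonglongrightarrow> mu_inf \<and> mu_inf < 1)"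
    proof (intro allI impI)
      fix kappa :: real
      assume kp: "kappa > 0"
        and EB: "\<forall>z. infdist z Omega \<le> suminf eps + distM M (x 0) Omega \<longrightarrow> subdiff f z \<noteq> {} \<longrightarrow>
             infdist z Omega \<le> kappa * infdist 0 (subdiff f z)"
        and crA: "\<forall>k. fk A c lam h p tau (sigma k) (x k) (x (Suc k))
                  - ereal (psik A c lam h p tau (sigma k) (x k) (u (Suc k)))
                \<le> ereal ((eps k)\<^sup>2 / (2 * sigma k))"
        and crB: "\<forall>k. fk A c lam h p tau (sigma k) (x k) (x (Suc k))
                  - ereal (psik A c lam h p tau (sigma k) (x k) (u (Suc k)))
                \<le> ereal ((delta k)\<^sup>2 / (2 * sigma k) * (norm (x (Suc k) - x k))\<^sup>2
                         + tau * (delta k)\<^sup>2 / (2 * sigma k) * (norm (A *v x (Suc k) - A *v x k))\<^sup>2)"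
      define K where "K = kappa * zeta"
      have Kpos: "K > 0" using kp zpos by (simp add: K_def)
      have th: "(\<lambda>k. K / sqrt ((sigma k)\<^sup>2 + K\<^sup>2)) \<longlonglongrightarrow> (if sigma_inf = \<infinity> then 0 else K / sqrt ((real_of_ereal sigma_inf)\<^sup>2 + K\<^sup>2))"
        "(if sigma_inf = \<infinity> then 0 else K / sqrt ((real_of_ereal sigma_inf)\<^sup>2 + K\<^sup>2)) < 1"
        using theta_lim[of sigma K] sigma_pos sigma_mono Kpos unfolding sigma_inf_def by auto
      have d0: "delta \<longlonglongrightarrow> 0" by (rule summable_LIMSEQ_zero[OF delta_summable])
      have K2: "kappa\<^sup>2 * zeta\<^sup>2 = K\<^sup>2" by (simp add: K_def power_mult_distrib)
      have mueq: "(1 / (1 - delta k)) * (delta k + (1 + delta k) * kappa * zeta / sqrt ((sigma k)\<^sup>2 + kappa\<^sup>2 * zeta\<^sup>2))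
          = (1 / (1 - delta k)) * (delta k + (1 + delta k) * (K / sqrt ((sigma k)\<^sup>2 + K\<^sup>2)))" for k
        by (simp add: K2 K_def mult.assoc)
      have muinf: "(if sigma_inf = \<infinity> then 0 else kappa * zeta / sqrt ((real_of_ereal sigma_inf)\<^sup>2 + kappa\<^sup>2 * zeta\<^sup>2))
          = (if sigma_inf = \<infinity> then 0 else K / sqrt ((real_of_ereal sigma_inf)\<^sup>2 + K\<^sup>2))"
        by (simp add: K2 K_def)
      have lim: "(\<lambda>k. (1 / (1 - delta k)) * (delta k + (1 + delta k) * (K / sqrt ((sigma k)\<^sup>2 + K\<^sup>2))))
          \<longlonglongrightarrow> (1 / (1 - 0)) * (0 + (1 + 0) * (if sigma_inf = \<infinity> then 0 else K / sqrt ((real_of_ereal sigma_inf)\<^sup>2 + K\<^sup>2)))"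
        by (intro tendsto_intros d0 th(1)) auto
      have rate: "distM M (x (Suc k)) Omega \<le> (1 / (1 - delta k)) * (delta k + (1 + delta k) * kappa * zeta
                              / sqrt ((sigma k)\<^sup>2 + kappa\<^sup>2 * zeta\<^sup>2)) * distM M (x k) Omega" for k
      proof -
        have "compact P.Om" using Omega_compact Om by simp
        from P.part2[OF this, of sigma eps delta kappa x u k] sigma_pos eps_nonneg eps_summable delta_nonneg delta_lt1 kp
          EB crA crB
        show ?thesis unfolding Om Mt zeta[symmetric] f_def by blast
      qed
      show "let mu = (\<lambda>k. (1 / (1 - delta k)) * (delta k + (1 + delta k) * kappa * zeta
                              / sqrt ((sigma k)\<^sup>2 + kappa\<^sup>2 * zeta\<^sup>2)));
                 mu_inf = (if sigma_inf = \<infinity> then 0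
                           else kappa * zeta / sqrt ((real_of_ereal sigma_inf)\<^sup>2 + kappa\<^sup>2 * zeta\<^sup>2))
             in (\<forall>k. distM M (x (Suc k)) Omega \<le> mu k * distM M (x k) Omega)
                \<and> mu \<longlonglongrightarrow> mu_inf \<and> mu_inf < 1"
      proof -
        have rate': "\<forall>k. distM M (x (Suc k)) Omega \<le> (1 / (1 - delta k)) * (delta k + (1 + delta k) * (K / sqrt ((sigma k)\<^sup>2 + K\<^sup>2))) * distM M (x k) Omega"
          using rate mueq by metis
        show ?thesis unfolding Let_def mueq muinf using rate' lim th(2) by simp
      qed
    qed
  qed
qed

end
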